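(* Let $n\ge3$, let $M$ be a polytope in $\mathbb{R}^n$ with nonempty interior, and let $F\sim F'$ be neighboring facets. Then for any $f\in H^1(e_{F,F'})$ and $0<\varepsilon<1$, $$l_{F,F'}^2\int_{e_{F,F'}}(f')^2\,d\mathcal{H}^1\ge(1-\varepsilon)^2\pi^2\int_{e_{F,F'}}f^2\,d\mathcal{H}^1-\frac2\varepsilon\,l_{F,F'}\{f(n_F)^2+f(n_{F'})^2\}.$$
   Context: Facets $F,F'$ of $M$ are neighbors ($F\sim F'$) if $\dim(F\cap F')=n-2$; $n_F$ denotes the outer unit normal of $F$. The edge $e_{F,F'}\subset S^{n-1}$ is the shortest geodesic arc between $n_F$ and $n_{F'}$, of length $l_{F,F'}$, parametrized by arclength; $f'$ is the derivative with respect to arclength; $H^1(e_{F,F'})$ is the Sobolev space of functions on the edge with one weak derivative in $L^2$ (these are continuous, so endpoint values make sense). $\mathcal{H}^1$ is arclength measure. *)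

theory Defs
  imports "HOL-Analysis.Analysis"
begin

definition outer_normal :: "('a::euclidean_space) set \<Rightarrow> 'a set \<Rightarrow> 'a" where
  "outer_normal M F = (THE u. norm u = 1 \<and>
      (\<exists>b. (\<forall>x\<in>M. u \<bullet> x \<le> b) \<and> F = M \<inter> {x. u \<bullet> x = b}))"

definition arc_len :: "'a::euclidean_space \<Rightarrow> 'a \<Rightarrow> real" where
  "arc_len u v = arccos (u \<bullet> v)"

text \<open>Arclength parametrisation on [0, arc_len u v] of the shortest geodesic arc
  from u to v on the unit sphere (u, v unit vectors, v \<noteq> \<plusminus>u).\<close>
definition arc_path :: "'a::euclidean_space \<Rightarrow> 'a \<Rightarrow> real \<Rightarrow> 'a" where
  "arc_path u v t = cos t *\<^sub>R u +
     sin t *\<^sub>R ((1 / norm (v - (u \<bullet> v) *\<^sub>R u)) *\<^sub>R (v - (u \<bullet> v) *\<^sub>R u))"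

definition edge_len :: "('a::euclidean_space) set \<Rightarrow> 'a set \<Rightarrow> 'a set \<Rightarrow> real" where
  "edge_len M F F' = arc_len (outer_normal M F) (outer_normal M F')"

definition edge_path :: "('a::euclidean_space) set \<Rightarrow> 'a set \<Rightarrow> 'a set \<Rightarrow> real \<Rightarrow> 'a" where
  "edge_path M F F' = arc_path (outer_normal M F) (outer_normal M F')"

definition test_fun :: "real \<Rightarrow> (real \<Rightarrow> real) \<Rightarrow> bool" where
  "test_fun l \<phi> \<longleftrightarrow> (\<forall>k x. ((deriv ^^ k) \<phi>) differentiable (at x)) \<and>
     (\<exists>a b. 0 < a \<and> b < l \<and> (\<forall>x. x \<notin> {a..b} \<longrightarrow> \<phi> x = 0))"

definition weak_deriv_L2 :: "real \<Rightarrow> (real \<Rightarrow> real) \<Rightarrow> (real \<Rightarrow> real) \<Rightarrow> bool" where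
  "weak_deriv_L2 l g h \<longleftrightarrow>
     set_borel_measurable lborel {0..l} h \<and>
     set_integrable lborel {0..l} (\<lambda>t. (h t)\<^sup>2) \<and>
     (\<forall>\<phi>. test_fun l \<phi> \<longrightarrow>
        (LINT t:{0..l}|lborel. g t * deriv \<phi> t) = - (LINT t:{0..l}|lborel. h t * \<phi> t))"

text \<open>H^1(0,l), with the continuous representative.\<close>
definition H1_on :: "real \<Rightarrow> (real \<Rightarrow> real) \<Rightarrow> bool" where
  "H1_on l g \<longleftrightarrow> continuous_on {0..l} g \<and>
     set_integrable lborel {0..l} (\<lambda>t. (g t)\<^sup>2) \<and> (\<exists>h. weak_deriv_L2 l g h)"

end

theory Submission
  imports Defs "HOL-Computational_Algebra.Polynomial"
begin

definition smooth :: "(real \<Rightarrow> real) \<Rightarrow> bool" where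
  "smooth f \<longleftrightarrow> (\<forall>k x. (deriv ^^ k) f differentiable (at x))"

lemma smooth_coind:
  assumes "P f" and step: "\<And>f. P f \<Longrightarrow> (\<forall>x. f differentiable (at x)) \<and> P (deriv f)"
  shows "smooth f"
proof -
  have "\<forall>f. P f \<longrightarrow> P ((deriv ^^ k) f)" for k
  proof (induction k)
    case 0 then show ?case by simp
  next
    case (Suc k)
    show ?case
    proof (intro allI impI)
      fix f assume "P f"
      then have "P (deriv f)" using step by blast
      then have "P ((deriv ^^ k) (deriv f))" using Suc by blast
      then show "P ((deriv ^^ Suc k) f)" by (simp add: funpow_Suc_right del: funpow.simps)
    qed
  qed
  then show ?thesis unfolding smooth_def using assms by blast
qed

lemma smooth_deriv: "smooth f \<Longrightarrow> smooth (deriv f)"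
  unfolding smooth_def by (metis funpow_Suc_right comp_apply)

lemma smooth_diffble: "smooth f \<Longrightarrow> f differentiable (at x)"
  unfolding smooth_def by (metis funpow_0)

lemma smooth_from_deriv:
  assumes "\<And>x. f differentiable (at x)" "smooth (deriv f)"
  shows "smooth f"
  unfolding smooth_def
proof (intro allI)
  fix k x show "(deriv ^^ k) f differentiable (at x)"
  proof (cases k)
    case 0 then show ?thesis using assms by simp
  next
    case (Suc j)
    then show ?thesis using assms(2) unfolding smooth_def by (simp add: funpow_Suc_right del: funpow.simps)
  qed
qed

lemma smooth_affine:
  assumes "smooth g"
  shows "smooth (\<lambda>x. k * g (a * x + b))"
proof (rule smooth_coind[where P = "\<lambda>f. \<exists>g k. smooth g \<and> f = (\<lambda>x. k * g (a * x + b))"])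
  show "\<exists>ga ka. smooth ga \<and> (\<lambda>x. k * g (a * x + b)) = (\<lambda>x. ka * ga (a * x + b))" using assms by blast
next
  fix f assume "\<exists>g k. smooth g \<and> f = (\<lambda>x. k * g (a * x + b))"
  then obtain g k where g: "smooth g" and f: "f = (\<lambda>x. k * g (a * x + b))" by blast
  have d: "(f has_real_derivative k * (deriv g (a * x + b) * a)) (at x)" for x
  proof -
    have "(g has_real_derivative deriv g (a * x + b)) (at (a * x + b))"
      using smooth_diffble[OF g] by (simp add: DERIV_deriv_iff_real_differentiable)
    then show ?thesis unfolding f
      by (auto intro!: derivative_eq_intros DERIV_chain2[where f = g])
  qed
  have "\<forall>x. f differentiable (at x)" using d real_differentiable_def by blast
  moreover have "deriv f = (\<lambda>x. (k * a) * deriv g (a * x + b))"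
    using d by (intro ext DERIV_imp_deriv) (simp add: algebra_simps)
  ultimately show "(\<forall>x. f differentiable (at x)) \<and> (\<exists>g k. smooth g \<and> deriv f = (\<lambda>x. k * g (a * x + b)))"
    using smooth_deriv[OF g] by blast
qed

lemma smooth_diff:
  assumes "smooth f1" "smooth f2"
  shows "smooth (\<lambda>x. f1 x - f2 x)"
proof (rule smooth_coind[where P = "\<lambda>f. \<exists>g1 g2. smooth g1 \<and> smooth g2 \<and> f = (\<lambda>x. g1 x - g2 x)"])
  show "\<exists>g1 g2. smooth g1 \<and> smooth g2 \<and> (\<lambda>x. f1 x - f2 x) = (\<lambda>x. g1 x - g2 x)" using assms by blast
next
  fix f assume "\<exists>g1 g2. smooth g1 \<and> smooth g2 \<and> f = (\<lambda>x. g1 x - g2 x)"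
  then obtain g1 g2 where g: "smooth g1" "smooth g2" and f: "f = (\<lambda>x. g1 x - g2 x)" by blast
  have d: "(f has_real_derivative deriv g1 x - deriv g2 x) (at x)" for x
  proof -
    have "(g1 has_real_derivative deriv g1 x) (at x)" "(g2 has_real_derivative deriv g2 x) (at x)"
      using smooth_diffble[OF g(1)] smooth_diffble[OF g(2)] by (simp_all add: DERIV_deriv_iff_real_differentiable)
    then show ?thesis unfolding f by (intro derivative_eq_intros) auto
  qed
  have "\<forall>x. f differentiable (at x)" using d real_differentiable_def by blast
  moreover have "deriv f = (\<lambda>x. deriv g1 x - deriv g2 x)"
    using d by (intro ext DERIV_imp_deriv) simp
  ultimately show "(\<forall>x. f differentiable (at x)) \<and> (\<exists>g1 g2. smooth g1 \<and> smooth g2 \<and> deriv f = (\<lambda>x. g1 x - g2 x))"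
    using smooth_deriv[OF g(1)] smooth_deriv[OF g(2)] by blast
qed

definition bumpf :: "real poly \<Rightarrow> nat \<Rightarrow> real \<Rightarrow> real" where
  "bumpf p m x = (if 0 < x \<and> x < 1 then poly p x * exp (- 1 / x - 1 / (1 - x)) / (x * (1 - x)) ^ m else 0)"

definition bnext :: "real poly \<Rightarrow> nat \<Rightarrow> real poly" where
  "bnext p m = pderiv p * [:0, 1, -1:] ^ 2 + p * [:1, -2:] - smult (of_nat m) (p * [:1, -2:] * [:0, 1, -1:])"

lemma inv_sq_diff:
  fixes a b :: real
  assumes "a \<noteq> 0" "b \<noteq> 0"
  shows "1 / a^2 - 1 / b^2 = (b^2 - a^2) / (a * b)^2"
  using assms by (simp add: field_simps power2_eq_square)

lemma bump_alg:
  fixes P P' e D D' Dm :: real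
  assumes "D \<noteq> 0" "Dm \<noteq> 0"
  shows "((P' * e + e * (D' / D^2) * P) * Dm - P * e * (of_nat m * Dm / D * D')) / (Dm * Dm)
       = (P' * D^2 + P * D' - of_nat m * P * D' * D) * e / (Dm * D^2)"
  using assms by (simp add: field_simps power2_eq_square)

lemma bump_deriv_inside:
  assumes x: "0 < x" "x < 1"
  shows "(bumpf p m has_real_derivative bumpf (bnext p m) (m + 2) x) (at x)"
proof -
  define D where "D = x * (1 - x)"
  define D' where "D' = 1 - 2 * x"
  define e where "e = exp (- 1 / x - 1 / (1 - x))"
  have D0: "D \<noteq> 0" using x unfolding D_def by simp
  have dP: "((\<lambda>y. poly p y) has_real_derivative poly (pderiv p) x) (at x)" by simp
  have dg: "((\<lambda>y. - 1 / y - 1 / (1 - y)) has_real_derivative D' / D^2) (at x)"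
  proof -
    have "((\<lambda>y. - 1 / y - 1 / (1 - y)) has_real_derivative (1 / x^2 - 1 / (1 - x)^2)) (at x)"
      using x by (auto intro!: derivative_eq_intros simp: field_simps power2_eq_square)
    moreover have "1 / x^2 - 1 / (1 - x)^2 = D' / D^2"
    proof -
      have x0: "x \<noteq> 0" "1 - x \<noteq> 0" using x by auto
      have "1 / x^2 - 1 / (1 - x)^2 = ((1 - x)^2 - x^2) / (x * (1 - x))^2"
        using x0 by (rule inv_sq_diff)
      also have "(1 - x)^2 - x^2 = D'" unfolding D'_def by (simp add: power2_eq_square algebra_simps)
      finally show ?thesis unfolding D_def .
    qed
    ultimately show ?thesis by simp
  qed
  have dE: "((\<lambda>y. exp (- 1 / y - 1 / (1 - y))) has_real_derivative e * (D' / D^2)) (at x)"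
    unfolding e_def by (rule DERIV_chain2[OF DERIV_exp dg])
  have dDm: "((\<lambda>y. (y * (1 - y)) ^ m) has_real_derivative of_nat m * D^m / D * D') (at x)"
  proof -
    have dD: "((\<lambda>y. y * (1 - y)) has_real_derivative D') (at x)"
      unfolding D'_def by (auto intro!: derivative_eq_intros)
    have "((\<lambda>y. (y * (1 - y)) ^ m) has_real_derivative of_nat m * D' * (x * (1 - x)) ^ (m - Suc 0)) (at x)"
      using DERIV_power[OF dD, of m] by (simp add: mult.assoc)
    moreover have "of_nat m * D' * (x * (1 - x)) ^ (m - Suc 0) = of_nat m * D^m / D * D'"
    proof (cases m)
      case 0 then show ?thesis by simp
    next
      case (Suc j) then show ?thesis using D0 unfolding D_def by simp
    qed
    ultimately show ?thesis by simp
  qed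
  have dF: "((\<lambda>y. poly p y * exp (- 1 / y - 1 / (1 - y)) / (y * (1 - y)) ^ m) has_real_derivative
     ((poly (pderiv p) x * e + e * (D' / D^2) * poly p x) * D^m - poly p x * e * (of_nat m * D^m / D * D')) / (D^m * D^m)) (at x)"
    using DERIV_divide[OF DERIV_mult[OF dP dE] dDm] D0 unfolding D_def e_def by simp
  have "((poly (pderiv p) x * e + e * (D' / D^2) * poly p x) * D^m - poly p x * e * (of_nat m * D^m / D * D')) / (D^m * D^m)
      = (poly (pderiv p) x * D^2 + poly p x * D' - of_nat m * poly p x * D' * D) * e / (D^m * D^2)"
    using D0 by (intro bump_alg) auto
  also have "\<dots> = bumpf (bnext p m) (m + 2) x"
  proof -
    have "poly (bnext p m) x = poly (pderiv p) x * D^2 + poly p x * D' - of_nat m * poly p x * D' * D"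
      unfolding bnext_def D_def D'_def by (simp add: algebra_simps)
    then show ?thesis unfolding bumpf_def using x unfolding D_def e_def by (simp add: power_add power2_eq_square mult.assoc)
  qed
  finally have dF': "((\<lambda>y. poly p y * exp (- 1 / y - 1 / (1 - y)) / (y * (1 - y)) ^ m) has_real_derivative
      bumpf (bnext p m) (m + 2) x) (at x)" using dF by simp
  show ?thesis
    by (rule has_field_derivative_transform_within_open[OF dF', of "{0<..<1}"]) (use x in \<open>auto simp: bumpf_def\<close>)
qed

lemma exp_inv_lim: "((\<lambda>y. exp (- 1 / y) / y ^ k) \<longlongrightarrow> 0) (at_right (0::real))"
proof -
  have "((\<lambda>y. (inverse y) ^ k / exp (inverse y)) \<longlongrightarrow> 0) (at_right (0::real))"
    using filterlim_compose[OF tendsto_power_div_exp_0 filterlim_inverse_at_top_right] by simp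
  moreover have "eventually (\<lambda>y. (inverse y) ^ k / exp (inverse y) = exp (- 1 / y) / y ^ k) (at_right (0::real))"
  proof (rule eventually_mono[OF eventually_at_right_less[of 0]])
    fix y :: real assume "0 < y"
    have "exp (- 1 / y) = inverse (exp (inverse y))" by (simp add: exp_minus inverse_eq_divide)
    then show "(inverse y) ^ k / exp (inverse y) = exp (- 1 / y) / y ^ k"
      by (simp add: power_inverse divide_inverse mult.commute)
  qed
  ultimately show ?thesis by (rule Lim_transform_eventually)
qed

lemma left1_to_right0: "filterlim (\<lambda>y. 1 - y) (at_right 0) (at_left (1::real))"
  unfolding filterlim_at_left_to_right at_right_to_0[of "-1"] filterlim_filtermap
  by (simp add: filterlim_ident)

lemma bumpf_01: "bumpf p m 0 = 0" "bumpf p m 1 = 0"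
  by (simp_all add: bumpf_def)

lemma fac_alg0:
  fixes P E1 E2 y z :: real
  assumes "y \<noteq> 0" "z \<noteq> 0"
  shows "P * (E1 * E2) / (y * z) ^ m / y = (P * E2 / z ^ m) * (E1 / y ^ (m + 1))"
  using assms by (simp add: power_mult_distrib field_simps)

lemma fac_alg1:
  fixes P E1 E2 y z :: real
  assumes "y \<noteq> 0" "z \<noteq> 0"
  shows "P * (E1 * E2) / (y * z) ^ m / (- z) = - (P * E1 / y ^ m) * (E2 / z ^ (m + 1))"
  using assms by (simp add: power_mult_distrib field_simps)

lemma exp_split: "exp (- 1 / y - 1 / (1 - y)) = exp (- 1 / y) * exp (- 1 / (1 - (y::real)))"
proof -
  have "- 1 / y - 1 / (1 - y) = (- 1 / y) + (- 1 / (1 - y))" by (subst diff_conv_add_uminus[of "-1/y" "1/(1-y)"], subst minus_divide_left) (rule refl)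
  then show ?thesis by (simp only: exp_add)
qed

lemma bump_factor0:
  assumes "0 < y" "y < 1"
  shows "bumpf p m y / y = (poly p y * exp (- 1 / (1 - y)) / (1 - y) ^ m) * (exp (- 1 / y) / y ^ (m + 1))"
  using assms unfolding bumpf_def exp_split by (simp only: fac_alg0 if_True conj_absorb)

lemma bump_factor1:
  assumes "0 < y" "y < 1"
  shows "bumpf p m y / (y - 1) = - (poly p y * exp (- 1 / y) / y ^ m) * (exp (- 1 / (1 - y)) / (1 - y) ^ (m + 1))"
proof -
  have "y - 1 = - (1 - y)" by simp
  moreover have "bumpf p m y = poly p y * (exp (- 1 / y) * exp (- 1 / (1 - y))) / (y * (1 - y)) ^ m"
    using assms unfolding bumpf_def exp_split by simp
  ultimately have "bumpf p m y / (y - 1) = poly p y * (exp (- 1 / y) * exp (- 1 / (1 - y))) / (y * (1 - y)) ^ m / (- (1 - y))"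
    by (simp only:)
  also have "\<dots> = - (poly p y * exp (- 1 / y) / y ^ m) * (exp (- 1 / (1 - y)) / (1 - y) ^ (m + 1))"
    by (rule fac_alg1) (use assms in auto)
  finally show ?thesis .
qed

lemma bump_deriv_0: "(bumpf p m has_real_derivative 0) (at 0)"
  unfolding has_field_derivative_iff
proof (rule filterlim_split_at)
  show "((\<lambda>y. (bumpf p m y - bumpf p m 0) / (y - 0)) \<longlongrightarrow> 0) (at_left 0)"
  proof (rule Lim_transform_eventually[OF tendsto_const])
    show "\<forall>\<^sub>F y in at_left 0. 0 = (bumpf p m y - bumpf p m 0) / (y - 0)"
    proof -
      have "eventually (\<lambda>y. y \<in> {-1<..<0}) (at_left (0::real))" by (rule eventually_at_left_real) simp
      then show ?thesis by (rule eventually_mono) (simp add: bumpf_def)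
    qed
  qed
  have A: "((\<lambda>y. poly p y * exp (- 1 / (1 - y)) / (1 - y) ^ m) \<longlongrightarrow> poly p 0 * exp (- 1 / (1 - 0)) / (1 - 0) ^ m) (at_right 0)"
  proof -
    have "isCont (\<lambda>y. poly p y * exp (- 1 / (1 - y)) / (1 - y) ^ m) 0"
      by (intro continuous_intros) simp_all
    then have "((\<lambda>y. poly p y * exp (- 1 / (1 - y)) / (1 - y) ^ m) \<longlongrightarrow> poly p 0 * exp (- 1 / (1 - 0)) / (1 - 0) ^ m) (at 0)"
      unfolding isCont_def .
    then show ?thesis by (rule tendsto_mono[OF at_le, rotated]) simp
  qed
  have "((\<lambda>y. (poly p y * exp (- 1 / (1 - y)) / (1 - y) ^ m) * (exp (- 1 / y) / y ^ (m + 1))) \<longlongrightarrow> 0) (at_right 0)"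
    using tendsto_mult[OF A exp_inv_lim[of "m + 1"]] by (simp only: mult_zero_right)
  moreover have "eventually (\<lambda>y. (poly p y * exp (- 1 / (1 - y)) / (1 - y) ^ m) * (exp (- 1 / y) / y ^ (m + 1))
      = (bumpf p m y - bumpf p m 0) / (y - 0)) (at_right 0)"
  proof -
    have "eventually (\<lambda>y. y \<in> {0<..<1}) (at_right (0::real))" by (rule eventually_at_right_real) simp
    then show ?thesis by (rule eventually_mono) (simp add: bump_factor0 bumpf_01)
  qed
  ultimately show "((\<lambda>y. (bumpf p m y - bumpf p m 0) / (y - 0)) \<longlongrightarrow> 0) (at_right 0)"
    by (rule Lim_transform_eventually)
qed

lemma bump_deriv_1: "(bumpf p m has_real_derivative 0) (at 1)"
  unfolding has_field_derivative_iff
proof (rule filterlim_split_at)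
  show "((\<lambda>y. (bumpf p m y - bumpf p m 1) / (y - 1)) \<longlongrightarrow> 0) (at_right 1)"
  proof (rule Lim_transform_eventually[OF tendsto_const])
    show "\<forall>\<^sub>F y in at_right 1. 0 = (bumpf p m y - bumpf p m 1) / (y - 1)"
    proof -
      have "eventually (\<lambda>y. y \<in> {1<..<2}) (at_right (1::real))" by (rule eventually_at_right_real) simp
      then show ?thesis by (rule eventually_mono) (simp add: bumpf_def)
    qed
  qed
  have A: "((\<lambda>y. poly p y * exp (- 1 / y) / y ^ m) \<longlongrightarrow> poly p 1 * exp (- 1 / 1) / 1 ^ m) (at_left 1)"
  proof -
    have "isCont (\<lambda>y. poly p y * exp (- 1 / y) / y ^ m) 1"
      by (intro continuous_intros) simp_all
    then have "((\<lambda>y. poly p y * exp (- 1 / y) / y ^ m) \<longlongrightarrow> poly p 1 * exp (- 1 / 1) / 1 ^ m) (at 1)"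
      unfolding isCont_def .
    then show ?thesis by (rule tendsto_mono[OF at_le, rotated]) simp
  qed
  have B: "((\<lambda>y. exp (- 1 / (1 - y)) / (1 - y) ^ (m + 1)) \<longlongrightarrow> 0) (at_left (1::real))"
    using filterlim_compose[OF exp_inv_lim[of "m + 1"] left1_to_right0] by (simp only:)
  have "((\<lambda>y. - (poly p y * exp (- 1 / y) / y ^ m) * (exp (- 1 / (1 - y)) / (1 - y) ^ (m + 1))) \<longlongrightarrow> 0) (at_left 1)"
    using tendsto_mult[OF tendsto_minus[OF A] B] by (simp only: mult_zero_right)
  moreover have "eventually (\<lambda>y. - (poly p y * exp (- 1 / y) / y ^ m) * (exp (- 1 / (1 - y)) / (1 - y) ^ (m + 1))
      = (bumpf p m y - bumpf p m 1) / (y - 1)) (at_left 1)"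
  proof -
    have "eventually (\<lambda>y. y \<in> {0<..<1}) (at_left (1::real))" by (rule eventually_at_left_real) simp
    then show ?thesis by (rule eventually_mono) (simp add: bump_factor1 bumpf_01)
  qed
  ultimately show "((\<lambda>y. (bumpf p m y - bumpf p m 1) / (y - 1)) \<longlongrightarrow> 0) (at_left 1)"
    by (rule Lim_transform_eventually)
qed

lemma bump_deriv_out:
  assumes "x < 0 \<or> 1 < x"
  shows "(bumpf p m has_real_derivative 0) (at x)"
proof -
  have "((\<lambda>y. 0) has_real_derivative 0) (at x)" by simp
  then show ?thesis
  proof (rule has_field_derivative_transform_within_open[where S = "{..<0} \<union> {1<..}"])
    show "open ({..<(0::real)} \<union> {1<..})" by auto
    show "x \<in> {..<0} \<union> {1<..}" using assms by auto
    show "\<And>y. y \<in> {..<0} \<union> {1<..} \<Longrightarrow> 0 = bumpf p m y" by (auto simp: bumpf_def)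
  qed
qed

lemma bump_deriv: "(bumpf p m has_real_derivative bumpf (bnext p m) (m + 2) x) (at x)"
proof -
  consider "0 < x \<and> x < 1" | "x = 0" | "x = 1" | "x < 0 \<or> 1 < x" by linarith
  then show ?thesis
  proof cases
    case 1 then show ?thesis using bump_deriv_inside by blast
  next
    case 2 then show ?thesis using bump_deriv_0 by (simp add: bumpf_01)
  next
    case 3 then show ?thesis using bump_deriv_1 by (simp add: bumpf_01)
  next
    case 4
    then have "bumpf (bnext p m) (m + 2) x = 0" by (auto simp: bumpf_def)
    then show ?thesis using bump_deriv_out[OF 4] by simp
  qed
qed

lemma smooth_bumpf: "smooth (bumpf p m)"
proof (rule smooth_coind[where P = "\<lambda>f. \<exists>p m. f = bumpf p m"])
  fix f assume "\<exists>p m. f = bumpf p m"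
  then obtain p m where f: "f = bumpf p m" by blast
  have "\<forall>x. f differentiable (at x)" unfolding f using bump_deriv real_differentiable_def by blast
  moreover have "deriv f = bumpf (bnext p m) (m + 2)"
    unfolding f by (intro ext DERIV_imp_deriv bump_deriv)
  ultimately show "(\<forall>x. f differentiable (at x)) \<and> (\<exists>p m. deriv f = bumpf p m)" by blast
qed auto

definition B0 :: "real \<Rightarrow> real" where "B0 = bumpf 1 0"

lemma B0_eq: "B0 x = (if 0 < x \<and> x < 1 then exp (- 1 / x - 1 / (1 - x)) else 0)"
  unfolding B0_def bumpf_def by simp

lemma B0_nonneg: "0 \<le> B0 x" unfolding B0_eq by simp

lemma B0_zero: "x \<le> 0 \<or> 1 \<le> x \<Longrightarrow> B0 x = 0" unfolding B0_eq by auto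

lemma B0_cont: "continuous_on S B0"
proof -
  have "isCont B0 x" for x unfolding B0_def using bump_deriv by (rule DERIV_isCont)
  then show ?thesis by (simp add: continuous_at_imp_continuous_on)
qed

lemma B0_int: "B0 integrable_on {a..b}"
  by (rule integrable_continuous_interval[OF B0_cont])

definition cB :: real where "cB = integral {0..1} B0"

lemma cB_pos: "0 < cB"
proof -
  have lb: "exp (-8) \<le> B0 x" if "x \<in> {1/4..3/4}" for x
  proof -
    have x: "1/4 \<le> x" "x \<le> 3/4" using that by auto
    have "1 / x \<le> 1 / (1/4)" using x by (intro divide_left_mono) auto
    moreover have "1 / (1 - x) \<le> 1 / (1/4)" using x by (intro divide_left_mono) auto
    moreover have "1 / (1/4::real) = 4" by simp
    ultimately have "-8 \<le> - 1 / x - 1 / (1 - x)" by (simp only: minus_divide_left[symmetric])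
    then have "exp (-8) \<le> exp (- 1 / x - 1 / (1 - x))" by (simp only: exp_le_cancel_iff)
    moreover have "0 < x \<and> x < 1" using x by linarith
    ultimately show ?thesis unfolding B0_eq by (simp only: if_True simp_thms)
  qed
  have "integral {1/4..3/4::real} (\<lambda>x. exp (-8)) \<le> integral {1/4..3/4} B0"
    using lb by (intro integral_le B0_int) auto
  moreover have "integral {1/4..3/4::real} (\<lambda>x. exp (-8::real)) = exp (-8) * (3/4 - 1/4)"
    using has_integral_const_real[of "exp (-8::real)" "1/4" "3/4"] by (intro integral_unique) (simp add: mult.commute)
  moreover have "0 < exp (-8::real) * (3/4 - 1/4)" by simp
  ultimately have pos: "0 < integral {1/4..3/4} B0" by linarith
  have "integral {0..1/4} B0 + integral {1/4..1} B0 = integral {0..1} B0"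
    by (rule Henstock_Kurzweil_Integration.integral_combine) (auto intro: B0_int)
  moreover have "integral {1/4..3/4} B0 + integral {3/4..1} B0 = integral {1/4..1} B0"
    by (rule Henstock_Kurzweil_Integration.integral_combine) (auto intro: B0_int)
  moreover have "0 \<le> integral {0..1/4} B0" "0 \<le> integral {3/4..1} B0"
    by (auto intro!: integral_nonneg B0_int B0_nonneg)
  ultimately show ?thesis unfolding cB_def using pos by linarith
qed

definition Sf :: "real \<Rightarrow> real" where "Sf x = integral {-1..x} B0 / cB"

lemma int_B0_le0: "u \<le> 0 \<Longrightarrow> integral {a..u} B0 = 0"
proof -
  assume u: "u \<le> 0"
  have "integral {a..u} B0 = integral {a..u} (\<lambda>_. 0::real)"
    using u by (intro integral_cong B0_zero) auto
  then show ?thesis by simp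
qed

lemma Sf_le0: "x \<le> 0 \<Longrightarrow> Sf x = 0"
  unfolding Sf_def using int_B0_le0 by simp

lemma int_B0_ge1: "1 \<le> u \<Longrightarrow> integral {-1..u} B0 = cB"
proof -
  assume u: "1 \<le> u"
  have "integral {-1..0} B0 + integral {0..u} B0 = integral {-1..u} B0"
    using u by (intro Henstock_Kurzweil_Integration.integral_combine B0_int) auto
  moreover have "integral {0..1} B0 + integral {1..u} B0 = integral {0..u} B0"
    using u by (intro Henstock_Kurzweil_Integration.integral_combine B0_int) auto
  moreover have "integral {1..u} B0 = 0"
  proof -
    have "integral {1..u} B0 = integral {1..u} (\<lambda>_. 0::real)"
      by (intro integral_cong B0_zero) auto
    then show ?thesis by simp
  qed
  ultimately show ?thesis using int_B0_le0[of 0 "-1"] unfolding cB_def by simp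
qed

lemma Sf_ge1: "1 \<le> x \<Longrightarrow> Sf x = 1"
  unfolding Sf_def using int_B0_ge1 cB_pos by simp

lemma Sf_range: "0 \<le> Sf x \<and> Sf x \<le> 1"
proof (cases "x \<le> 0")
  case True then show ?thesis by (simp add: Sf_le0)
next
  case False
  show ?thesis
  proof (cases "1 \<le> x")
    case True then show ?thesis by (simp add: Sf_ge1)
  next
    case False2: False
    have "integral {-1..0} B0 + integral {0..x} B0 = integral {-1..x} B0"
      using False by (intro Henstock_Kurzweil_Integration.integral_combine B0_int) auto
    then have e: "integral {-1..x} B0 = integral {0..x} B0" using int_B0_le0[of 0 "-1"] by simp
    have "integral {0..x} B0 + integral {x..1} B0 = cB"
      unfolding cB_def using False False2 by (intro Henstock_Kurzweil_Integration.integral_combine B0_int) auto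
    moreover have "0 \<le> integral {0..x} B0" "0 \<le> integral {x..1} B0"
      by (auto intro!: integral_nonneg B0_int B0_nonneg)
    ultimately have "0 \<le> integral {0..x} B0" "integral {0..x} B0 \<le> cB" by linarith+
    then show ?thesis unfolding Sf_def e using cB_pos by (simp add: divide_le_eq_1_pos)
  qed
qed

lemma Sf_deriv: "(Sf has_real_derivative B0 x / cB) (at x)"
proof (cases "x < -1/2")
  case True
  have "((\<lambda>y. 0) has_real_derivative 0) (at x)" by simp
  then have "(Sf has_real_derivative 0) (at x)"
  proof (rule has_field_derivative_transform_within_open[where S = "{..<0}"])
    show "open {..<(0::real)}" by simp
    show "x \<in> {..<0}" using True by simp
    show "\<And>y. y \<in> {..<0} \<Longrightarrow> 0 = Sf y" by (simp add: Sf_le0)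
  qed
  moreover have "B0 x = 0" using True by (intro B0_zero) simp
  ultimately show ?thesis by simp
next
  case False
  have x1: "x \<in> {-1..x+1}" using False by simp
  have d1: "((\<lambda>u. integral {-1..u} B0) has_real_derivative B0 x) (at x within {-1..x+1})"
    by (rule integral_has_real_derivative[OF B0_cont x1])
  have "x \<in> interior {-1..x+1}" using False by simp
  then have "((\<lambda>u. integral {-1..u} B0) has_real_derivative B0 x) (at x)"
    using d1 by (simp only: at_within_interior)
  then have "((\<lambda>u. integral {-1..u} B0 / cB) has_real_derivative B0 x / cB) (at x)"
    by (rule DERIV_cdivide)
  then show ?thesis unfolding Sf_def[abs_def] .
qed

lemma deriv_Sf: "deriv Sf = (\<lambda>x. (1 / cB) * B0 (1 * x + 0))"
  by (rule ext, rule DERIV_imp_deriv) (use Sf_deriv in simp)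

lemma smooth_Sf: "smooth Sf"
proof (rule smooth_from_deriv)
  show "Sf differentiable (at x)" for x using Sf_deriv real_differentiable_def by blast
  show "smooth (deriv Sf)" unfolding deriv_Sf B0_def by (intro smooth_affine smooth_bumpf)
qed

lemma abs_int_cont_prod:
  fixes h f :: "real \<Rightarrow> real"
  assumes "h absolutely_integrable_on {u..v}" "continuous_on {u..v} f"
  shows "(\<lambda>x. h x * f x) integrable_on {u..v}"
proof -
  have "(\<lambda>x. f x * h x) absolutely_integrable_on {u..v}"
  proof (rule absolutely_integrable_bounded_measurable_product_real)
    show "f \<in> borel_measurable (lebesgue_on {u..v})"
      using assms(2) by (rule continuous_imp_measurable_on_sets_lebesgue) simp
    show "bounded (f ` {u..v})"
      using assms(2) by (intro compact_imp_bounded compact_continuous_image) auto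
  qed (use assms in auto)
  then show ?thesis unfolding absolutely_integrable_on_def by (simp add: mult.commute)
qed

lemma integral_zero_outside:
  fixes f :: "real \<Rightarrow> real"
  assumes "f integrable_on {u..v}" "{u..v} \<subseteq> {p..q}" "\<And>x. x \<notin> {u..v} \<Longrightarrow> f x = 0"
  shows "integral {p..q} f = integral {u..v} f"
proof -
  have "(f has_integral integral {u..v} f) {u..v}" using assms(1) by (rule integrable_integral)
  then have "(f has_integral integral {u..v} f) {p..q}"
    by (rule has_integral_on_superset) (use assms in auto)
  then show ?thesis by (rule integral_unique)
qed

definition phi :: "real \<Rightarrow> real \<Rightarrow> real \<Rightarrow> real \<Rightarrow> real" where
  "phi a b r x = Sf ((x - a) / r) - Sf ((x - b) / r + 1)"

lemma smooth_phi:
  assumes "r \<noteq> 0"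
  shows "smooth (phi a b r)"
proof -
  have e: "phi a b r = (\<lambda>x. 1 * Sf ((1 / r) * x + (- a / r)) - 1 * Sf ((1 / r) * x + (1 - b / r)))"
    unfolding phi_def using assms by (intro ext) (simp add: diff_divide_distrib add_divide_distrib algebra_simps)
  have "smooth (\<lambda>x. 1 * Sf ((1 / r) * x + (- a / r)) - 1 * Sf ((1 / r) * x + (1 - b / r)))"
    by (intro smooth_diff smooth_affine smooth_Sf)
  then show ?thesis unfolding e .
qed

lemma phi_deriv:
  assumes "r \<noteq> 0"
  shows "(phi a b r has_real_derivative (B0 ((x - a) / r) / cB / r - B0 ((x - b) / r + 1) / cB / r)) (at x)"
proof -
  have d1: "((\<lambda>x. (x - a) / r) has_real_derivative 1 / r) (at x)"
    using assms by (auto intro!: derivative_eq_intros)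
  have d2: "((\<lambda>x. (x - b) / r + 1) has_real_derivative 1 / r) (at x)"
    using assms by (auto intro!: derivative_eq_intros)
  have "((\<lambda>x. Sf ((x - a) / r)) has_real_derivative B0 ((x - a) / r) / cB * (1 / r)) (at x)"
    by (rule DERIV_chain2[OF Sf_deriv d1])
  moreover have "((\<lambda>x. Sf ((x - b) / r + 1)) has_real_derivative B0 ((x - b) / r + 1) / cB * (1 / r)) (at x)"
    by (rule DERIV_chain2[OF Sf_deriv d2])
  ultimately show ?thesis unfolding phi_def[abs_def] by (intro DERIV_diff[THEN DERIV_cong]) auto
qed

lemma phi_support:
  assumes "0 < r" "2 * r \<le> b - a" "x \<notin> {a..b}"
  shows "phi a b r x = 0"
proof (cases "x < a")
  case True
  have "(x - a) / r \<le> 0" using True assms(1) by (simp add: divide_nonpos_pos)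
  moreover have "(x - b) / r + 1 \<le> 0"
  proof -
    have "x - b \<le> - r" using True assms by linarith
    then have "(x - b) / r \<le> - r / r" using assms(1) by (intro divide_right_mono) auto
    then show ?thesis using assms(1) by simp
  qed
  ultimately show ?thesis unfolding phi_def by (simp add: Sf_le0)
next
  case False
  then have xb: "b < x" using assms(3) by auto
  have "1 \<le> (x - a) / r"
  proof -
    have "r \<le> x - a" using xb assms by linarith
    then have "r / r \<le> (x - a) / r" using assms(1) by (intro divide_right_mono) auto
    then show ?thesis using assms(1) by simp
  qed
  moreover have "1 \<le> (x - b) / r + 1" using xb assms(1) by simp
  ultimately show ?thesis unfolding phi_def by (simp add: Sf_ge1)
qed

lemma phi_test:
  assumes "0 < a" "b < l" "0 < r" "2 * r \<le> b - a"
  shows "test_fun l (phi a b r)"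
  unfolding test_fun_def
proof
  show "\<forall>k x. (deriv ^^ k) (phi a b r) differentiable (at x)"
    using smooth_phi[of r a b] assms(3) unfolding smooth_def by simp
  show "\<exists>a' b'. 0 < a' \<and> b' < l \<and> (\<forall>x. x \<notin> {a'..b'} \<longrightarrow> phi a b r x = 0)"
    using assms phi_support by blast
qed

lemma phi_left:
  assumes "0 < r" "2 * r \<le> b - a" "x \<le> a + r"
  shows "phi a b r x = Sf ((x - a) / r)"
proof -
  have "x - b \<le> - r" using assms by linarith
  then have "(x - b) / r \<le> - r / r" using assms(1) by (intro divide_right_mono) auto
  then have "(x - b) / r + 1 \<le> 0" using assms(1) by simp
  then show ?thesis unfolding phi_def by (simp add: Sf_le0)
qed

lemma phi_right:
  assumes "0 < r" "2 * r \<le> b - a" "b - r \<le> x"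
  shows "phi a b r x = 1 - Sf ((x - b) / r + 1)"
proof -
  have "r \<le> x - a" using assms by linarith
  then have "r / r \<le> (x - a) / r" using assms(1) by (intro divide_right_mono) auto
  then have "1 \<le> (x - a) / r" using assms(1) by simp
  then show ?thesis unfolding phi_def by (simp add: Sf_ge1)
qed

lemma phi_mid:
  assumes "0 < r" "a + r \<le> x" "x \<le> b - r"
  shows "phi a b r x = 1"
proof -
  have "r \<le> x - a" using assms by linarith
  then have "r / r \<le> (x - a) / r" using assms(1) by (intro divide_right_mono) auto
  then have "1 \<le> (x - a) / r" using assms(1) by simp
  moreover have "x - b \<le> - r" using assms by linarith
  then have "(x - b) / r \<le> - r / r" using assms(1) by (intro divide_right_mono) auto
  then have "(x - b) / r + 1 \<le> 0" using assms(1) by simp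
  ultimately show ?thesis unfolding phi_def by (simp add: Sf_le0 Sf_ge1)
qed

lemma phi_range:
  assumes "0 < r" "2 * r \<le> b - a"
  shows "0 \<le> phi a b r x \<and> phi a b r x \<le> 1"
proof (cases "x \<le> a + r")
  case True then show ?thesis using phi_left[OF assms True] Sf_range by simp
next
  case False
  show ?thesis
  proof (cases "b - r \<le> x")
    case True then show ?thesis using phi_right[OF assms True] Sf_range[of "(x - b) / r + 1"] by simp
  next
    case False2: False
    then show ?thesis using phi_mid[of r a x b] assms False by simp
  qed
qed

lemma cont_phi:
  assumes "r \<noteq> 0" shows "continuous_on S (phi a b r)"
proof -
  have "isCont (phi a b r) x" for x using phi_deriv[OF assms] by (rule DERIV_isCont)
  then show ?thesis by (simp add: continuous_at_imp_continuous_on)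
qed

lemma ftc_real:
  fixes F f :: "real \<Rightarrow> real"
  assumes "u \<le> v" "\<And>x. (F has_real_derivative f x) (at x)"
  shows "(f has_integral (F v - F u)) {u..v}"
  using assms(1)
proof (rule fundamental_theorem_of_calculus)
  fix x assume "x \<in> {u..v}"
  show "(F has_vector_derivative f x) (at x within {u..v})"
    using assms(2)[of x] by (simp add: has_real_derivative_iff_has_vector_derivative[symmetric] has_field_derivative_at_within)
qed

lemma int_psi1:
  assumes "0 < r"
  shows "((\<lambda>x. B0 ((x - a) / r) / cB / r) has_integral 1) {a..a+r}"
proof -
  have "((\<lambda>x. B0 ((x - a) / r) / cB * (1 / r)) has_integral (Sf ((a + r - a) / r) - Sf ((a - a) / r))) {a..a+r}"
  proof (rule ftc_real)
    show "a \<le> a + r" using assms by simp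
    fix x
    have d1: "((\<lambda>x. (x - a) / r) has_real_derivative 1 / r) (at x)"
      using assms by (auto intro!: derivative_eq_intros)
    show "((\<lambda>x. Sf ((x - a) / r)) has_real_derivative B0 ((x - a) / r) / cB * (1 / r)) (at x)"
      by (rule DERIV_chain2[OF Sf_deriv d1])
  qed
  moreover have "(a + r - a) / r = 1" "(a - a) / r = 0" using assms by auto
  ultimately show ?thesis using Sf_le0[of 0] Sf_ge1[of 1] by simp
qed

lemma int_psi2:
  assumes "0 < r"
  shows "((\<lambda>x. B0 ((x - b) / r + 1) / cB / r) has_integral 1) {b-r..b}"
proof -
  have "((\<lambda>x. B0 ((x - b) / r + 1) / cB * (1 / r)) has_integral (Sf ((b - b) / r + 1) - Sf ((b - r - b) / r + 1))) {b-r..b}"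
  proof (rule ftc_real)
    show "b - r \<le> b" using assms by simp
    fix x
    have d1: "((\<lambda>x. (x - b) / r + 1) has_real_derivative 1 / r) (at x)"
      using assms by (auto intro!: derivative_eq_intros)
    show "((\<lambda>x. Sf ((x - b) / r + 1)) has_real_derivative B0 ((x - b) / r + 1) / cB * (1 / r)) (at x)"
      by (rule DERIV_chain2[OF Sf_deriv d1])
  qed
  moreover have "(b - r - b) / r + 1 = 0" "(b - b) / r + 1 = 1" using assms by auto
  ultimately show ?thesis using Sf_le0[of 0] Sf_ge1[of 1] by simp
qed

lemma avg_bound:
  fixes g \<psi> :: "real \<Rightarrow> real"
  assumes "(\<psi> has_integral 1) {u..v}" "\<And>x. x \<in> {u..v} \<Longrightarrow> 0 \<le> \<psi> x"
    "continuous_on {u..v} g" "continuous_on {u..v} \<psi>"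
    "\<And>x. x \<in> {u..v} \<Longrightarrow> \<bar>g x - c\<bar> \<le> e"
  shows "\<bar>integral {u..v} (\<lambda>x. g x * \<psi> x) - c\<bar> \<le> e"
proof -
  have i1: "(\<lambda>x. g x * \<psi> x) integrable_on {u..v}"
    by (intro integrable_continuous_interval continuous_intros assms)
  have "((\<lambda>x. g x * \<psi> x - c * \<psi> x) has_integral (integral {u..v} (\<lambda>x. g x * \<psi> x) - c * 1)) {u..v}"
    by (intro has_integral_diff has_integral_mult_right integrable_integral i1 assms(1))
  then have e1: "integral {u..v} (\<lambda>x. (g x - c) * \<psi> x) = integral {u..v} (\<lambda>x. g x * \<psi> x) - c"
    by (simp add: integral_unique left_diff_distrib)
  have "norm (integral {u..v} (\<lambda>x. (g x - c) * \<psi> x)) \<le> integral {u..v} (\<lambda>x. e * \<psi> x)"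
  proof (rule Henstock_Kurzweil_Integration.integral_norm_bound_integral)
    show "(\<lambda>x. (g x - c) * \<psi> x) integrable_on {u..v}"
      by (intro integrable_continuous_interval continuous_intros assms)
    show "(\<lambda>x. e * \<psi> x) integrable_on {u..v}"
      using has_integral_mult_right[OF assms(1), of e] by blast
    fix x assume x: "x \<in> {u..v}"
    show "norm ((g x - c) * \<psi> x) \<le> e * \<psi> x"
      using assms(2,5)[OF x] by (simp add: abs_mult mult_right_mono)
  qed
  moreover have "integral {u..v} (\<lambda>x. e * \<psi> x) = e"
    using integral_unique[OF has_integral_mult_right[OF assms(1), of e]] by simp
  ultimately show ?thesis using e1 integral_unique[OF assms(1)] by simp
qed

lemma tail_bound:
  fixes h q :: "real \<Rightarrow> real"
  assumes "h absolutely_integrable_on {u..v}" "continuous_on {u..v} q" "\<And>x. x \<in> {u..v} \<Longrightarrow> \<bar>q x\<bar> \<le> 1"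
  shows "\<bar>integral {u..v} (\<lambda>x. h x * q x)\<bar> \<le> integral {u..v} (\<lambda>x. \<bar>h x\<bar>)"
proof -
  have "norm (integral {u..v} (\<lambda>x. h x * q x)) \<le> integral {u..v} (\<lambda>x. \<bar>h x\<bar>)"
  proof (rule Henstock_Kurzweil_Integration.integral_norm_bound_integral)
    show "(\<lambda>x. h x * q x) integrable_on {u..v}" by (rule abs_int_cont_prod[OF assms(1,2)])
    show "(\<lambda>x. \<bar>h x\<bar>) integrable_on {u..v}" using assms(1) unfolding absolutely_integrable_on_def by simp
    fix x assume "x \<in> {u..v}"
    then show "norm (h x * q x) \<le> \<bar>h x\<bar>"
      using assms(3) by (simp add: abs_mult mult_left_le)
  qed
  then show ?thesis by simp
qed

lemma B0_comp_cont: "continuous_on S f \<Longrightarrow> continuous_on S (\<lambda>x. B0 (f x))"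
  by (rule continuous_on_compose2[OF B0_cont[of UNIV]]) auto

lemma dbr_inner:
  fixes g h :: "real \<Rightarrow> real"
  assumes l: "0 < l" and gc: "continuous_on {0..l} g" and hi: "h absolutely_integrable_on {0..l}"
    and weak: "\<And>\<phi>. test_fun l \<phi> \<Longrightarrow> integral {0..l} (\<lambda>t. g t * deriv \<phi> t) = - integral {0..l} (\<lambda>t. h t * \<phi> t)"
    and ab: "0 < a" "a < b" "b < l"
  shows "g b - g a = integral {a..b} h"
proof -
  define F where "F x = integral {0..x} (\<lambda>t. \<bar>h t\<bar>)" for x
  have habs: "(\<lambda>t. \<bar>h t\<bar>) integrable_on {0..l}" using hi unfolding absolutely_integrable_on_def by simp
  have Fc: "continuous_on {0..l} F" unfolding F_def[abs_def] by (rule indefinite_integral_continuous_1[OF habs])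
  have Fdiff: "integral {u..v} (\<lambda>t. \<bar>h t\<bar>) = F v - F u" if "0 \<le> u" "u \<le> v" "v \<le> l" for u v
  proof -
    have "integral {0..u} (\<lambda>t. \<bar>h t\<bar>) + integral {u..v} (\<lambda>t. \<bar>h t\<bar>) = integral {0..v} (\<lambda>t. \<bar>h t\<bar>)"
      using that by (intro Henstock_Kurzweil_Integration.integral_combine integrable_on_subinterval[OF habs]) auto
    then show ?thesis unfolding F_def by simp
  qed
  have hab: "h absolutely_integrable_on {a..b}" using hi ab by (intro absolutely_integrable_on_subinterval) auto
  have key: "\<bar>g b - g a - integral {a..b} h\<bar> \<le> 4 * e" if e: "e > 0" for e
  proof -
    have a0l: "a \<in> {0..l}" and b0l: "b \<in> {0..l}" using ab by auto
    obtain d1 where d1: "d1 > 0" "\<forall>x\<in>{0..l}. dist x a < d1 \<longrightarrow> dist (g x) (g a) < e"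
      using gc a0l e unfolding continuous_on_iff by blast
    obtain d2 where d2: "d2 > 0" "\<forall>x\<in>{0..l}. dist x b < d2 \<longrightarrow> dist (g x) (g b) < e"
      using gc b0l e unfolding continuous_on_iff by blast
    obtain d3 where d3: "d3 > 0" "\<forall>x\<in>{0..l}. dist x a < d3 \<longrightarrow> dist (F x) (F a) < e"
      using Fc a0l e unfolding continuous_on_iff by blast
    obtain d4 where d4: "d4 > 0" "\<forall>x\<in>{0..l}. dist x b < d4 \<longrightarrow> dist (F x) (F b) < e"
      using Fc b0l e unfolding continuous_on_iff by blast
    define r where "r = min (min (min d1 d2) (min d3 d4)) (b - a) / 2"
    have r0: "0 < r" using d1 d2 d3 d4 ab unfolding r_def by simp
    have r2: "2 * r \<le> b - a" unfolding r_def by (simp add: min_le_iff_disj)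
    have rd: "r < d1" "r < d2" "r < d3" "r < d4" using d1 d2 d3 d4 ab unfolding r_def by (auto simp: min_def)
    define \<phi> where "\<phi> = phi a b r"
    define \<psi>1 where "\<psi>1 x = B0 ((x - a) / r) / cB / r" for x
    define \<psi>2 where "\<psi>2 x = B0 ((x - b) / r + 1) / cB / r" for x
    have dphi: "deriv \<phi> = (\<lambda>x. \<psi>1 x - \<psi>2 x)"
      unfolding \<phi>_def \<psi>1_def \<psi>2_def using r0 by (intro ext DERIV_imp_deriv phi_deriv) simp
    have W: "integral {0..l} (\<lambda>t. g t * (\<psi>1 t - \<psi>2 t)) = - integral {0..l} (\<lambda>t. h t * \<phi> t)"
      using weak[OF phi_test[OF ab(1,3) r0 r2]] unfolding \<phi>_def[symmetric] dphi .
    have c1: "continuous_on S \<psi>1" for S unfolding \<psi>1_def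
      by (intro continuous_intros B0_comp_cont) (use r0 cB_pos in auto)
    have c2: "continuous_on S \<psi>2" for S unfolding \<psi>2_def
      by (intro continuous_intros B0_comp_cont) (use r0 cB_pos in auto)
    have cphi: "continuous_on S \<phi>" for S unfolding \<phi>_def using r0 by (intro cont_phi) simp
    have gsub: "continuous_on {u..v} g" if "0 \<le> u" "v \<le> l" for u v
      by (rule continuous_on_subset[OF gc]) (use that in auto)
    have ig1: "(\<lambda>t. g t * \<psi>1 t) integrable_on {u..v}" if "0 \<le> u" "v \<le> l" for u v
      by (intro integrable_continuous_interval continuous_intros gsub[OF that] c1)
    have ig2: "(\<lambda>t. g t * \<psi>2 t) integrable_on {u..v}" if "0 \<le> u" "v \<le> l" for u v
      by (intro integrable_continuous_interval continuous_intros gsub[OF that] c2)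
    have ar: "a + r \<le> b - r" using r2 by linarith
    have I1: "integral {0..l} (\<lambda>t. g t * \<psi>1 t) = integral {a..a+r} (\<lambda>t. g t * \<psi>1 t)"
    proof (rule integral_zero_outside)
      show "(\<lambda>t. g t * \<psi>1 t) integrable_on {a..a+r}" using ab ar by (intro ig1) auto
      show "{a..a+r} \<subseteq> {0..l}" using ab ar by auto
      fix x assume x: "x \<notin> {a..a+r}"
      have "(x - a) / r \<le> 0 \<or> 1 \<le> (x - a) / r"
      proof (cases "x < a")
        case True then show ?thesis using r0 by (simp add: divide_nonpos_pos)
      next
        case False
        then have "r \<le> x - a" using x by auto
        then have "r / r \<le> (x - a) / r" using r0 by (intro divide_right_mono) auto
        then show ?thesis using r0 by simp
      qed
      then show "g x * \<psi>1 x = 0" unfolding \<psi>1_def by (simp add: B0_zero)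
    qed
    have I2: "integral {0..l} (\<lambda>t. g t * \<psi>2 t) = integral {b-r..b} (\<lambda>t. g t * \<psi>2 t)"
    proof (rule integral_zero_outside)
      show "(\<lambda>t. g t * \<psi>2 t) integrable_on {b-r..b}" using ab ar r0 by (intro ig2) auto
      show "{b-r..b} \<subseteq> {0..l}" using ab ar r0 by auto
      fix x assume x: "x \<notin> {b-r..b}"
      have "(x - b) / r + 1 \<le> 0 \<or> 1 \<le> (x - b) / r + 1"
      proof (cases "x < b - r")
        case True
        then have "x - b \<le> - r" by simp
        then have "(x - b) / r \<le> - r / r" using r0 by (intro divide_right_mono) auto
        then show ?thesis using r0 by simp
      next
        case False
        then have "b < x" using x by auto
        then show ?thesis using r0 by simp
      qed
      then show "g x * \<psi>2 x = 0" unfolding \<psi>2_def by (simp add: B0_zero)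
    qed
    have Isplit: "integral {0..l} (\<lambda>t. g t * (\<psi>1 t - \<psi>2 t)) = integral {0..l} (\<lambda>t. g t * \<psi>1 t) - integral {0..l} (\<lambda>t. g t * \<psi>2 t)"
    proof -
      have "integral {0..l} (\<lambda>t. g t * \<psi>1 t - g t * \<psi>2 t) = integral {0..l} (\<lambda>t. g t * \<psi>1 t) - integral {0..l} (\<lambda>t. g t * \<psi>2 t)"
        by (intro integral_diff ig1 ig2) auto
      then show ?thesis by (simp add: right_diff_distrib)
    qed
    have II: "\<bar>integral {a..a+r} (\<lambda>t. g t * \<psi>1 t) - g a\<bar> \<le> e"
    proof (rule avg_bound)
      show "(\<psi>1 has_integral 1) {a..a+r}" unfolding \<psi>1_def[abs_def] by (rule int_psi1[OF r0])
      show "0 \<le> \<psi>1 x" for x unfolding \<psi>1_def using B0_nonneg cB_pos r0 by simp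
      show "continuous_on {a..a+r} g" using ab ar by (intro gsub) auto
      show "continuous_on {a..a+r} \<psi>1" by (rule c1)
      fix x assume x: "x \<in> {a..a+r}"
      then have "x \<in> {0..l}" "dist x a < d1" using ab ar rd r0 by (auto simp: dist_real_def)
      then show "\<bar>g x - g a\<bar> \<le> e" using d1 by (auto simp: dist_real_def)
    qed
    have III: "\<bar>integral {b-r..b} (\<lambda>t. g t * \<psi>2 t) - g b\<bar> \<le> e"
    proof (rule avg_bound)
      show "(\<psi>2 has_integral 1) {b-r..b}" unfolding \<psi>2_def[abs_def] by (rule int_psi2[OF r0])
      show "0 \<le> \<psi>2 x" for x unfolding \<psi>2_def using B0_nonneg cB_pos r0 by simp
      show "continuous_on {b-r..b} g" using ab ar r0 by (intro gsub) auto
      show "continuous_on {b-r..b} \<psi>2" by (rule c2)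
      fix x assume x: "x \<in> {b-r..b}"
      then have "x \<in> {0..l}" "dist x b < d2" using ab ar rd r0 by (auto simp: dist_real_def)
      then show "\<bar>g x - g b\<bar> \<le> e" using d2 by (auto simp: dist_real_def)
    qed
    have ihphi: "(\<lambda>t. h t * \<phi> t) integrable_on {a..b}" by (rule abs_int_cont_prod[OF hab cphi])
    have IV1: "integral {0..l} (\<lambda>t. h t * \<phi> t) = integral {a..b} (\<lambda>t. h t * \<phi> t)"
    proof (rule integral_zero_outside[OF ihphi])
      show "{a..b} \<subseteq> {0..l}" using ab by auto
      fix x assume "x \<notin> {a..b}"
      then show "h x * \<phi> x = 0" unfolding \<phi>_def using phi_support[OF r0 r2] by simp
    qed
    define q where "q x = 1 - \<phi> x" for x
    have cq: "continuous_on S q" for S unfolding q_def by (intro continuous_intros cphi)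
    have qb: "\<bar>q x\<bar> \<le> 1" for x unfolding q_def \<phi>_def using phi_range[OF r0 r2, of x] by simp
    have ihq: "(\<lambda>t. h t * q t) integrable_on {u..v}" if "a \<le> u" "v \<le> b" for u v
      by (rule abs_int_cont_prod[OF absolutely_integrable_on_subinterval[OF hab] cq]) (use that in auto)
    have IV2: "integral {a..b} h - integral {a..b} (\<lambda>t. h t * \<phi> t) = integral {a..b} (\<lambda>t. h t * q t)"
    proof -
      have "integral {a..b} (\<lambda>t. h t - h t * \<phi> t) = integral {a..b} h - integral {a..b} (\<lambda>t. h t * \<phi> t)"
        using hab ihphi by (intro integral_diff) (auto simp: absolutely_integrable_on_def)
      then show ?thesis unfolding q_def by (simp add: right_diff_distrib)
    qed
    have IV3: "integral {a..b} (\<lambda>t. h t * q t) = integral {a..a+r} (\<lambda>t. h t * q t) + integral {a+r..b-r} (\<lambda>t. h t * q t) + integral {b-r..b} (\<lambda>t. h t * q t)"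
    proof -
      have "integral {a..a+r} (\<lambda>t. h t * q t) + integral {a+r..b} (\<lambda>t. h t * q t) = integral {a..b} (\<lambda>t. h t * q t)"
        using r0 ar by (intro Henstock_Kurzweil_Integration.integral_combine ihq) auto
      moreover have "integral {a+r..b-r} (\<lambda>t. h t * q t) + integral {b-r..b} (\<lambda>t. h t * q t) = integral {a+r..b} (\<lambda>t. h t * q t)"
        using r0 ar by (intro Henstock_Kurzweil_Integration.integral_combine ihq) auto
      ultimately show ?thesis by simp
    qed
    have IVm: "integral {a+r..b-r} (\<lambda>t. h t * q t) = 0"
    proof -
      have "integral {a+r..b-r} (\<lambda>t. h t * q t) = integral {a+r..b-r} (\<lambda>t. 0)"
        by (intro integral_cong) (use phi_mid[OF r0] in \<open>auto simp: q_def \<phi>_def\<close>)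
      then show ?thesis by simp
    qed
    have IVl: "\<bar>integral {a..a+r} (\<lambda>t. h t * q t)\<bar> \<le> e"
    proof -
      have "\<bar>integral {a..a+r} (\<lambda>t. h t * q t)\<bar> \<le> integral {a..a+r} (\<lambda>t. \<bar>h t\<bar>)"
        by (rule tail_bound[OF absolutely_integrable_on_subinterval[OF hab] cq qb]) (use r0 ar in auto)
      also have "\<dots> = F (a + r) - F a" using ab ar r0 by (intro Fdiff) auto
      also have "\<dots> \<le> e"
      proof -
        have "a + r \<in> {0..l}" "dist (a + r) a < d3" using ab ar r0 rd by (auto simp: dist_real_def)
        then have "dist (F (a + r)) (F a) < e" using d3 by blast
        then show ?thesis by (simp add: dist_real_def)
      qed
      finally show ?thesis .
    qed
    have IVr: "\<bar>integral {b-r..b} (\<lambda>t. h t * q t)\<bar> \<le> e"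
    proof -
      have "\<bar>integral {b-r..b} (\<lambda>t. h t * q t)\<bar> \<le> integral {b-r..b} (\<lambda>t. \<bar>h t\<bar>)"
        by (rule tail_bound[OF absolutely_integrable_on_subinterval[OF hab] cq qb]) (use r0 ar in auto)
      also have "\<dots> = F b - F (b - r)" using ab ar r0 by (intro Fdiff) auto
      also have "\<dots> \<le> e"
      proof -
        have "b - r \<in> {0..l}" "dist (b - r) b < d4" using ab ar r0 rd by (auto simp: dist_real_def)
        then have "dist (F (b - r)) (F b) < e" using d4 by blast
        then show ?thesis by (simp add: dist_real_def)
      qed
      finally show ?thesis .
    qed
    show ?thesis using W Isplit I1 I2 II III IV1 IV2 IV3 IVm IVl IVr by linarith
  qed
  have "\<bar>g b - g a - integral {a..b} h\<bar> \<le> 0"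
  proof (rule field_le_epsilon)
    fix e :: real assume "0 < e"
    then have "\<bar>g b - g a - integral {a..b} h\<bar> \<le> 4 * (e / 4)" by (intro key) simp
    then show "\<bar>g b - g a - integral {a..b} h\<bar> \<le> 0 + e" by simp
  qed
  then show ?thesis by simp
qed

lemma dbr_full:
  fixes g h :: "real \<Rightarrow> real"
  assumes l: "0 < l" and gc: "continuous_on {0..l} g" and hi: "h absolutely_integrable_on {0..l}"
    and weak: "\<And>\<phi>. test_fun l \<phi> \<Longrightarrow> integral {0..l} (\<lambda>t. g t * deriv \<phi> t) = - integral {0..l} (\<lambda>t. h t * \<phi> t)"
    and ab: "0 \<le> a" "a \<le> b" "b \<le> l"
  shows "g b - g a = integral {a..b} h"
proof -
  have hint: "h integrable_on {0..l}" using hi unfolding absolutely_integrable_on_def by simp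
  define I where "I x = integral {0..x} h" for x
  define H where "H x = g x - I x" for x
  have Ic: "continuous_on {0..l} I" unfolding I_def[abs_def] by (rule indefinite_integral_continuous_1[OF hint])
  have Hc: "continuous_on {0..l} H" unfolding H_def[abs_def] by (intro continuous_intros gc Ic)
  have Idiff: "integral {u..v} h = I v - I u" if "0 \<le> u" "u \<le> v" "v \<le> l" for u v
  proof -
    have "integral {0..u} h + integral {u..v} h = integral {0..v} h"
      using that by (intro Henstock_Kurzweil_Integration.integral_combine integrable_on_subinterval[OF hint]) auto
    then show ?thesis unfolding I_def by simp
  qed
  have Hconst: "H x = H (l / 2)" if "x \<in> {0<..<l}" for x
  proof -
    have m: "0 < l / 2" "l / 2 < l" using l by auto
    consider "x < l / 2" | "x = l / 2" | "l / 2 < x" by linarith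
    then show ?thesis
    proof cases
      case 1
      have "g (l/2) - g x = integral {x..l/2} h" using that 1 m by (intro dbr_inner[OF l gc hi weak]) auto
      moreover have "integral {x..l/2} h = I (l/2) - I x" using that 1 m by (intro Idiff) auto
      ultimately show ?thesis unfolding H_def by simp
    next
      case 2 then show ?thesis by (simp only:)
    next
      case 3
      have "g x - g (l/2) = integral {l/2..x} h" using that 3 m by (intro dbr_inner[OF l gc hi weak]) auto
      moreover have "integral {l/2..x} h = I x - I (l/2)" using that 3 m by (intro Idiff) auto
      ultimately show ?thesis unfolding H_def by simp
    qed
  qed
  have Hall: "H x = H (l / 2)" if "x \<in> {0..l}" for x
  proof (rule continuous_constant_on_closure[where S = "{0<..<l}" and f = H and a = "H (l / 2)"])
    show "continuous_on (closure {0<..<l}) H" using Hc l by simp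
    show "\<And>x. x \<in> {0<..<l} \<Longrightarrow> H x = H (l / 2)" by (rule Hconst)
    show "x \<in> closure {0<..<l}" using that l by simp
  qed
  have "H b = H a" using Hall[of a] Hall[of b] ab by auto
  then show ?thesis using Idiff[OF ab] unfolding H_def by simp
qed

definition cotw :: "real \<Rightarrow> real \<Rightarrow> real \<Rightarrow> real" where
  "cotw \<omega> \<delta> t = \<omega> * cos (\<omega> * (t + \<delta>)) / sin (\<omega> * (t + \<delta>))"

lemma has_integral_const_ab:
  fixes a b c :: real
  assumes "a \<le> b"
  shows "((\<lambda>x. c) has_integral (c * (b - a))) {a..b}"
  using has_integral_const_real[of c a b] assms by (simp add: mult.commute)

lemma trig_aux:
  fixes S C w :: real
  assumes "S * S + C * C = 1"
  shows "(- (w * (S * w) * S) - w * C * (C * w)) / (S * S) = -(w*w/(S*S))"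
proof -
  have "- (w * (S * w) * S) - w * C * (C * w) = -(w*w)*(S*S+C*C)" by algebra
  then show ?thesis using assms by simp
qed

lemma frac_aux:
  fixes I d :: real
  assumes "d \<noteq> 0"
  shows "2 * (I / d) * I - (I / d)^2 * d = I^2 / d"
  using assms by (simp add: field_simps power2_eq_square)

lemma sq_div_aux:
  fixes x d :: real
  assumes "d \<noteq> 0"
  shows "(x / d)^2 * d = x^2 / d"
  using assms by (simp add: field_simps power2_eq_square)

lemma cauchy_schwarz_interval:
  fixes h :: "real \<Rightarrow> real"
  assumes "a < b" "h integrable_on {a..b}" "(\<lambda>t. (h t)^2) integrable_on {a..b}"
  shows "(integral {a..b} h)^2 / (b - a) \<le> integral {a..b} (\<lambda>t. (h t)^2)"
proof -
  define I where "I = integral {a..b} h"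
  define m where "m = I / (b - a)"
  have "((\<lambda>t. (h t)^2 - 2 * m * h t + m^2) has_integral
          (integral {a..b} (\<lambda>t. (h t)^2) - 2 * m * I + m^2 * (b - a))) {a..b}"
    using assms unfolding I_def
    by (intro has_integral_add has_integral_diff has_integral_mult_right has_integral_integral
          has_integral_const_ab) auto
  moreover have "\<And>t. t \<in> {a..b} \<Longrightarrow> 0 \<le> (h t)^2 - 2 * m * h t + m^2"
  proof -
    fix t have "(h t)^2 - 2 * m * h t + m^2 = (h t - m)^2" by (simp add: power2_eq_square algebra_simps)
    then show "0 \<le> (h t)^2 - 2 * m * h t + m^2" by simp
  qed
  ultimately have "0 \<le> integral {a..b} (\<lambda>t. (h t)^2) - 2 * m * I + m^2 * (b - a)"
    by (rule has_integral_nonneg)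
  moreover have "2 * m * I - m^2 * (b - a) = I^2 / (b - a)"
    using assms(1) unfolding m_def by (intro frac_aux) simp
  ultimately show ?thesis unfolding I_def by linarith
qed

lemma cotw_deriv:
  assumes "sin (\<omega> * (t + \<delta>)) \<noteq> 0"
  shows "(cotw \<omega> \<delta> has_real_derivative (- (\<omega> * \<omega>) / (sin (\<omega> * (t + \<delta>)))\<^sup>2)) (at t)"
proof -
  have "((\<lambda>t. \<omega> * cos (\<omega> * (t + \<delta>)) / sin (\<omega> * (t + \<delta>))) has_real_derivative
     ((\<omega> * (- sin (\<omega> * (t + \<delta>)) * (\<omega> * (1 + 0)))) * sin (\<omega> * (t + \<delta>)) -
        \<omega> * cos (\<omega> * (t + \<delta>)) * (cos (\<omega> * (t + \<delta>)) * (\<omega> * (1 + 0)))) /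
       (sin (\<omega> * (t + \<delta>)) * sin (\<omega> * (t + \<delta>)))) (at t)"
    using assms by (intro derivative_eq_intros refl) auto
  moreover have "((\<omega> * (- sin (\<omega> * (t + \<delta>)) * (\<omega> * (1 + 0)))) * sin (\<omega> * (t + \<delta>)) -
        \<omega> * cos (\<omega> * (t + \<delta>)) * (cos (\<omega> * (t + \<delta>)) * (\<omega> * (1 + 0)))) /
       (sin (\<omega> * (t + \<delta>)) * sin (\<omega> * (t + \<delta>))) = - (\<omega> * \<omega>) / (sin (\<omega> * (t + \<delta>)))\<^sup>2"
  proof -
    have "sin (\<omega> * (t + \<delta>)) * sin (\<omega> * (t + \<delta>)) + cos (\<omega> * (t + \<delta>)) * cos (\<omega> * (t + \<delta>)) = 1"
      using sin_cos_squared_add[of "\<omega> * (t + \<delta>)"] by (simp add: power2_eq_square)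
    from trig_aux[OF this, of \<omega>] show ?thesis by (simp add: power2_eq_square del: mult_minus_left)
  qed
  ultimately show ?thesis unfolding cotw_def[abs_def] by simp
qed

lemma piece_ineq:
  fixes g h :: "real \<Rightarrow> real"
  assumes "0 < \<omega>" "0 < \<delta>" "0 \<le> a" "a < b" "\<omega> * (b + \<delta>) < pi"
    "h integrable_on {a..b}" "(\<lambda>t. (h t)^2) integrable_on {a..b}"
    "g b - g a = integral {a..b} h"
    "continuous_on {a..b} g"
    "\<forall>s\<in>{a..b}. \<forall>t\<in>{a..b}. \<bar>g s - g t\<bar> \<le> \<eta>" "\<forall>t\<in>{a..b}. \<bar>g t\<bar> \<le> K" "0 \<le> \<eta>" "\<eta> \<le> 1"
  shows "cotw \<omega> \<delta> b * (g b)^2 - cotw \<omega> \<delta> a * (g a)^2 + \<omega>^2 * integral {a..b} (\<lambda>t. (g t)^2)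
     - \<omega>^2 * (b - a) * (4 * \<eta> * (K + 1)) \<le> integral {a..b} (\<lambda>t. (h t)^2)"
proof -
  define s where "s = (g b - g a) / (b - a)"
  define G where "G t = g a + s * (t - a)" for t
  define W where "W = cotw \<omega> \<delta>"
  define \<Phi> where "\<Phi> t = W t * (G t)^2" for t
  define \<Phi>' where "\<Phi>' t = (- (\<omega> * \<omega>) / (sin (\<omega> * (t + \<delta>)))\<^sup>2) * (G t)^2 + W t * (2 * G t * s)" for t
  define Q where "Q t = (s - W t * G t)^2" for t
  have sinpos: "sin (\<omega> * (t + \<delta>)) > 0" if "t \<in> {a..b}" for t
  proof (rule sin_gt_zero)
    show "0 < \<omega> * (t + \<delta>)" using that assms by auto
    have "\<omega> * (t + \<delta>) \<le> \<omega> * (b + \<delta>)" using that assms by (intro mult_left_mono) auto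
    then show "\<omega> * (t + \<delta>) < pi" using assms by linarith
  qed
  have Gb: "G b = g b" using assms(4) unfolding G_def s_def by (simp add: field_simps)
  have Ga: "G a = g a" unfolding G_def by simp
  have dG: "(G has_real_derivative s) (at t)" for t
    unfolding G_def[abs_def] by (auto intro!: derivative_eq_intros)
  have dPhi: "(\<Phi> has_real_derivative \<Phi>' t) (at t)" if "t \<in> {a..b}" for t
  proof -
    have "(W has_real_derivative (- (\<omega> * \<omega>) / (sin (\<omega> * (t + \<delta>)))\<^sup>2)) (at t)"
      unfolding W_def using sinpos[OF that] by (intro cotw_deriv) simp
    from DERIV_mult[OF this DERIV_power[OF dG, of 2]] show ?thesis
      unfolding \<Phi>_def[abs_def] \<Phi>'_def by (simp add: algebra_simps)
  qed
  have ftc: "(\<Phi>' has_integral (\<Phi> b - \<Phi> a)) {a..b}"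
    using assms(4) dPhi
    by (intro fundamental_theorem_of_calculus)
       (auto simp: has_real_derivative_iff_has_vector_derivative[symmetric] intro: DERIV_subset)
  have contW: "continuous_on {a..b} W"
    unfolding W_def cotw_def[abs_def] using sinpos
    by (intro continuous_intros) (auto simp: less_imp_neq[symmetric] dest!: sinpos)
  have contG: "continuous_on {a..b} G" unfolding G_def[abs_def] by (intro continuous_intros)
  have intQ: "Q integrable_on {a..b}" unfolding Q_def
    by (intro integrable_continuous_interval continuous_intros contW contG)
  have intG2: "(\<lambda>t. (G t)^2) integrable_on {a..b}"
    by (intro integrable_continuous_interval continuous_intros contG)
  have intg2: "(\<lambda>t. (g t)^2) integrable_on {a..b}"
    by (intro integrable_continuous_interval continuous_intros assms(9))
  have pw: "s^2 = Q t + \<Phi>' t + \<omega>^2 * (G t)^2" if "t \<in> {a..b}" for t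
  proof -
    define S where "S = sin (\<omega> * (t + \<delta>))"
    define C where "C = cos (\<omega> * (t + \<delta>))"
    have S0: "S \<noteq> 0" using sinpos[OF that] unfolding S_def by simp
    have SC: "S^2 + C^2 = 1" unfolding S_def C_def by simp
    have Wt: "W t = \<omega> * C / S" unfolding W_def cotw_def S_def C_def by simp
    have "Q t + \<Phi>' t + \<omega>^2 * (G t)^2 = s^2 + (G t)^2 * ((W t)^2 - \<omega>^2 / S^2 + \<omega>^2)"
      unfolding Q_def \<Phi>'_def S_def by (simp add: power2_eq_square algebra_simps)
    also have "(W t)^2 - \<omega>^2 / S^2 + \<omega>^2 = \<omega>^2 * (C^2 + S^2 - 1) / S^2"
      unfolding Wt using S0 by (simp add: field_simps power2_eq_square)
    also have "\<dots> = 0" using SC by simp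
    finally show ?thesis by simp
  qed
  have "((\<lambda>t. Q t + \<Phi>' t + \<omega>^2 * (G t)^2) has_integral
      (integral {a..b} Q + (\<Phi> b - \<Phi> a) + \<omega>^2 * integral {a..b} (\<lambda>t. (G t)^2))) {a..b}"
    by (intro has_integral_add has_integral_mult_right ftc integrable_integral intQ intG2)
  then have "((\<lambda>t. s^2) has_integral
      (integral {a..b} Q + (\<Phi> b - \<Phi> a) + \<omega>^2 * integral {a..b} (\<lambda>t. (G t)^2))) {a..b}"
    by (rule has_integral_eq[rotated]) (simp add: pw)
  moreover have "((\<lambda>t. s^2) has_integral s^2 * (b - a)) {a..b}"
    using assms(4) by (intro has_integral_const_ab) simp
  ultimately have eq: "s^2 * (b - a) = integral {a..b} Q + (\<Phi> b - \<Phi> a) + \<omega>^2 * integral {a..b} (\<lambda>t. (G t)^2)"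
    using has_integral_unique by blast
  have Q0: "0 \<le> integral {a..b} Q"
    using intQ by (intro integral_nonneg) (auto simp: Q_def)
  have cs: "s^2 * (b - a) \<le> integral {a..b} (\<lambda>t. (h t)^2)"
  proof -
    have "s^2 * (b - a) = (integral {a..b} h)^2 / (b - a)"
      using assms(4) unfolding s_def assms(8)[symmetric] by (intro sq_div_aux) simp
    also have "\<dots> \<le> integral {a..b} (\<lambda>t. (h t)^2)"
      by (rule cauchy_schwarz_interval[OF assms(4,6,7)])
    finally show ?thesis .
  qed
  have GG: "(g t)^2 - 4 * \<eta> * (K + 1) \<le> (G t)^2" if "t \<in> {a..b}" for t
  proof -
    have ab: "a \<in> {a..b}" "b \<in> {a..b}" using assms(4) by auto
    have "\<bar>s * (t - a)\<bar> \<le> \<bar>g b - g a\<bar>"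
    proof -
      have "\<bar>s * (t - a)\<bar> = \<bar>g b - g a\<bar> * ((t - a) / (b - a))"
      proof -
        have "s * (t - a) = (g b - g a) * ((t - a) / (b - a))" unfolding s_def by simp
        then show ?thesis using that assms(4) by (simp add: abs_mult)
      qed
      also have "\<dots> \<le> \<bar>g b - g a\<bar> * 1"
        using that assms(4) by (intro mult_left_mono) auto
      finally show ?thesis by simp
    qed
    moreover have "\<bar>g b - g a\<bar> \<le> \<eta>" "\<bar>g a - g t\<bar> \<le> \<eta>" using assms(10) ab that by auto
    ultimately have d: "\<bar>G t - g t\<bar> \<le> 2 * \<eta>" unfolding G_def by linarith
    have gt: "\<bar>g t\<bar> \<le> K" using assms(11) that by auto
    have "(g t)^2 - (G t)^2 = (g t - G t) * (g t + G t)" by (simp add: power2_eq_square algebra_simps)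
    also have "\<dots> \<le> \<bar>g t - G t\<bar> * \<bar>g t + G t\<bar>" by (metis abs_ge_self abs_mult)
    also have "\<dots> \<le> (2 * \<eta>) * (2 * K + 2 * \<eta>)"
    proof (rule mult_mono)
      show "\<bar>g t - G t\<bar> \<le> 2 * \<eta>" using d by simp
      show "\<bar>g t + G t\<bar> \<le> 2 * K + 2 * \<eta>" using d gt by linarith
    qed (use assms in auto)
    also have "\<dots> \<le> 4 * \<eta> * (K + 1)" using assms(12,13) by (simp add: algebra_simps mult_left_mono)
    finally show ?thesis by linarith
  qed
  have "integral {a..b} (\<lambda>t. (g t)^2 - 4 * \<eta> * (K + 1)) \<le> integral {a..b} (\<lambda>t. (G t)^2)"
    using GG intG2 intg2 by (intro integral_le integrable_diff integrable_const_ivl) auto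
  moreover have "integral {a..b} (\<lambda>t. (g t)^2 - 4 * \<eta> * (K + 1)) = integral {a..b} (\<lambda>t. (g t)^2) - (4 * \<eta> * (K + 1)) * (b - a)"
    using has_integral_diff[OF integrable_integral[OF intg2] has_integral_const_ab[of a b "4 * \<eta> * (K + 1)"]] assms(4)
    by (intro integral_unique) simp
  ultimately have "integral {a..b} (\<lambda>t. (g t)^2) - (4 * \<eta> * (K + 1)) * (b - a) \<le> integral {a..b} (\<lambda>t. (G t)^2)"
    by simp
  then have "\<omega>^2 * (integral {a..b} (\<lambda>t. (g t)^2) - (4 * \<eta> * (K + 1)) * (b - a)) \<le> \<omega>^2 * integral {a..b} (\<lambda>t. (G t)^2)"
    by (intro mult_left_mono) auto
  moreover have "\<Phi> b = W b * (g b)^2" "\<Phi> a = W a * (g a)^2" unfolding \<Phi>_def Ga Gb by auto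
  ultimately show ?thesis using eq Q0 cs unfolding W_def by (simp add: algebra_simps)
qed

lemma global_ineq:
  fixes g h :: "real \<Rightarrow> real"
  assumes "0 < \<omega>" "0 < \<delta>" "0 < l" "\<omega> * (l + \<delta>) < pi"
    "h integrable_on {0..l}" "(\<lambda>t. (h t)^2) integrable_on {0..l}"
    "continuous_on {0..l} g"
    "\<And>a b. 0 \<le> a \<Longrightarrow> a \<le> b \<Longrightarrow> b \<le> l \<Longrightarrow> g b - g a = integral {a..b} h"
  shows "cotw \<omega> \<delta> l * (g l)^2 - cotw \<omega> \<delta> 0 * (g 0)^2 + \<omega>^2 * integral {0..l} (\<lambda>t. (g t)^2)
     \<le> integral {0..l} (\<lambda>t. (h t)^2)"
proof -
  define X where "X = cotw \<omega> \<delta> l * (g l)^2 - cotw \<omega> \<delta> 0 * (g 0)^2 + \<omega>^2 * integral {0..l} (\<lambda>t. (g t)^2)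
     - integral {0..l} (\<lambda>t. (h t)^2)"
  obtain K where K: "\<forall>t\<in>{0..l}. \<bar>g t\<bar> \<le> K"
    using compact_imp_bounded[OF compact_continuous_image[OF assms(7) compact_Icc]]
    unfolding bounded_iff by auto
  have K0: "0 \<le> K" using K assms(3) by force
  have uc: "uniformly_continuous_on {0..l} g"
    using assms(7) by (rule compact_uniformly_continuous) simp
  have intg2: "(\<lambda>t. (g t)^2) integrable_on {0..l}"
    by (intro integrable_continuous_interval continuous_intros assms(7))
  have main: "X \<le> \<omega>^2 * l * (4 * \<eta> * (K + 1))" if \<eta>: "0 < \<eta>" "\<eta> \<le> 1" for \<eta>
  proof -
    obtain d where d: "d > 0" "\<forall>x\<in>{0..l}. \<forall>x'\<in>{0..l}. dist x' x < d \<longrightarrow> dist (g x') (g x) < \<eta>"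
      using uc \<eta>(1) unfolding uniformly_continuous_on_def by blast
    obtain N :: nat where N: "l < real N * d" using ex_less_of_nat_mult[OF d(1)] by blast
    have N0: "N > 0" using N assms(3) by (cases N) auto
    define t where "t k = real k * l / real N" for k :: nat
    have tmono: "t i \<le> t j" if "i \<le> j" for i j
      unfolding t_def using that assms(3) by (intro divide_right_mono mult_right_mono) auto
    have t0: "t 0 = 0" by (simp add: t_def)
    have tN: "t N = l" using N0 by (simp add: t_def)
    have tge: "0 \<le> t k" for k unfolding t_def using assms(3) by simp
    have tle: "t k \<le> l" if "k \<le> N" for k using tmono[OF that] tN by simp
    have tstep: "t (Suc k) - t k = l / real N" for k unfolding t_def by (simp add: distrib_right add_divide_distrib diff_divide_distrib)
    have tlt: "t k < t (Suc k)" for k proof - have "l / real N > 0" using assms(3) N0 by simp then show ?thesis using tstep[of k] by linarith qed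
    have stepd: "l / real N < d" using N N0 by (simp add: field_simps)
    have "cotw \<omega> \<delta> (t k) * (g (t k))^2 - cotw \<omega> \<delta> 0 * (g 0)^2 + \<omega>^2 * integral {0..t k} (\<lambda>t. (g t)^2)
          - \<omega>^2 * t k * (4 * \<eta> * (K + 1)) \<le> integral {0..t k} (\<lambda>t. (h t)^2)" if "k \<le> N" for k
      using that
    proof (induction k)
      case 0
      then show ?case by (simp add: t0)
    next
      case (Suc k)
      have kN: "k \<le> N" using Suc.prems by simp
      have sub: "{t k..t (Suc k)} \<subseteq> {0..l}" "{0..t (Suc k)} \<subseteq> {0..l}"
        using tge tle Suc.prems by (auto intro: order_trans)
      have osc: "\<forall>s\<in>{t k..t (Suc k)}. \<forall>u\<in>{t k..t (Suc k)}. \<bar>g s - g u\<bar> \<le> \<eta>"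
      proof (intro ballI)
        fix s u assume su: "s \<in> {t k..t (Suc k)}" "u \<in> {t k..t (Suc k)}"
        have "dist s u < d" using su tstep[of k] stepd by (auto simp: dist_real_def)
        then have "dist (g s) (g u) < \<eta>" using d(2) su sub by blast
        then show "\<bar>g s - g u\<bar> \<le> \<eta>" by (simp add: dist_real_def)
      qed
      have pc: "cotw \<omega> \<delta> (t (Suc k)) * (g (t (Suc k)))^2 - cotw \<omega> \<delta> (t k) * (g (t k))^2
          + \<omega>^2 * integral {t k..t (Suc k)} (\<lambda>t. (g t)^2)
          - \<omega>^2 * (t (Suc k) - t k) * (4 * \<eta> * (K + 1)) \<le> integral {t k..t (Suc k)} (\<lambda>t. (h t)^2)"
      proof (rule piece_ineq[OF assms(1,2) tge tlt])
        have "\<omega> * (t (Suc k) + \<delta>) \<le> \<omega> * (l + \<delta>)" using tle[OF Suc.prems] assms(1) by (intro mult_left_mono) auto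
        then show "\<omega> * (t (Suc k) + \<delta>) < pi" using assms(4) by linarith
        show "h integrable_on {t k..t (Suc k)}" using assms(5) sub(1) by (rule integrable_on_subinterval)
        show "(\<lambda>t. (h t)^2) integrable_on {t k..t (Suc k)}" using assms(6) sub(1) by (rule integrable_on_subinterval)
        show "g (t (Suc k)) - g (t k) = integral {t k..t (Suc k)} h"
          using assms(8)[OF tge less_imp_le[OF tlt] tle[OF Suc.prems]] .
        show "continuous_on {t k..t (Suc k)} g" using assms(7) sub(1) by (rule continuous_on_subset)
        show "\<forall>s\<in>{t k..t (Suc k)}. \<forall>u\<in>{t k..t (Suc k)}. \<bar>g s - g u\<bar> \<le> \<eta>" by (rule osc)
        show "\<forall>u\<in>{t k..t (Suc k)}. \<bar>g u\<bar> \<le> K" using K sub by blast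
      qed (use \<eta> in auto)
      have c1: "integral {0..t k} (\<lambda>t. (g t)^2) + integral {t k..t (Suc k)} (\<lambda>t. (g t)^2) = integral {0..t (Suc k)} (\<lambda>t. (g t)^2)"
        by (rule Henstock_Kurzweil_Integration.integral_combine[OF tge less_imp_le[OF tlt] integrable_on_subinterval[OF intg2 sub(2)]])
      have c2: "integral {0..t k} (\<lambda>t. (h t)^2) + integral {t k..t (Suc k)} (\<lambda>t. (h t)^2) = integral {0..t (Suc k)} (\<lambda>t. (h t)^2)"
        by (rule Henstock_Kurzweil_Integration.integral_combine[OF tge less_imp_le[OF tlt] integrable_on_subinterval[OF assms(6) sub(2)]])
      show ?case using Suc.IH[OF kN] pc c1[symmetric] c2[symmetric] by (simp add: algebra_simps)
    qed
    from this[of N] show ?thesis unfolding X_def tN by simp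
  qed
  have "X \<le> 0"
  proof (rule field_le_epsilon)
    fix e :: real assume e: "0 < e"
    define C where "C = \<omega>^2 * l * (4 * (K + 1))"
    have C: "C > 0" unfolding C_def using assms(1,3) K0 by simp
    define \<eta> where "\<eta> = min 1 (e / C)"
    have "X \<le> \<omega>^2 * l * (4 * \<eta> * (K + 1))" using e C by (intro main) (auto simp: \<eta>_def)
    also have "\<dots> = C * \<eta>" unfolding C_def by (simp add: algebra_simps)
    also have "\<dots> \<le> C * (e / C)" using C by (intro mult_left_mono) (auto simp: \<eta>_def)
    also have "\<dots> = e" using C by simp
    finally show "X \<le> 0 + e" by simp
  qed
  then show ?thesis unfolding X_def by simp
qed

lemma hyperplane_eq_unit:
  fixes u v :: "'a::euclidean_space"
  assumes "norm u = 1" "norm v = 1" "{x. u \<bullet> x = b} = {x. v \<bullet> x = c}"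
  shows "v = u \<and> c = b \<or> v = - u \<and> c = - b"
proof -
  have "u \<noteq> 0" using assms(1) by auto
  then obtain x0 where x0: "u \<bullet> x0 = b" by (rule hyperplane_eq_Ex)
  have vx0: "v \<bullet> x0 = c" using assms(3) x0 by blast
  define y where "y = v - (u \<bullet> v) *\<^sub>R u"
  have uu: "u \<bullet> u = 1" using assms(1) by (simp add: dot_square_norm)
  have vv: "v \<bullet> v = 1" using assms(2) by (simp add: dot_square_norm)
  have "u \<bullet> y = 0" unfolding y_def by (simp add: inner_diff_right uu)
  then have "u \<bullet> (x0 + y) = b" using x0 by (simp add: inner_add_right)
  then have "v \<bullet> (x0 + y) = c" using assms(3) by blast
  then have vy: "v \<bullet> y = 0" using vx0 by (simp add: inner_add_right)
  have "y \<bullet> y = v \<bullet> y - (u \<bullet> v) * (u \<bullet> y)" unfolding y_def by (simp add: inner_diff_left)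
  then have "y \<bullet> y = 0" using vy \<open>u \<bullet> y = 0\<close> by simp
  then have "y = 0" by simp
  then have v: "v = (u \<bullet> v) *\<^sub>R u" unfolding y_def by simp
  have "(u \<bullet> v)^2 = 1"
  proof -
    have "v \<bullet> v = (u \<bullet> v)^2 * (u \<bullet> u)" by (subst (1 2) v) (simp add: power2_eq_square)
    then show ?thesis using uu vv by simp
  qed
  then have "u \<bullet> v = 1 \<or> u \<bullet> v = -1" by (simp add: power2_eq_1_iff)
  then show ?thesis
  proof
    assume "u \<bullet> v = 1" then have "v = u" using v by simp
    then show ?thesis using x0 vx0 by simp
  next
    assume "u \<bullet> v = -1" then have "v = - u" using v by simp
    then show ?thesis using x0 vx0 by simp
  qed
qed

lemma outer_normal_unit:
  fixes M F :: "'a::euclidean_space set"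
  assumes "polyhedron M" "interior M \<noteq> {}" "F facet_of M"
  shows "norm (outer_normal M F) = 1"
proof -
  let ?P = "\<lambda>u. norm u = 1 \<and> (\<exists>b. (\<forall>x\<in>M. u \<bullet> x \<le> b) \<and> F = M \<inter> {x. u \<bullet> x = b})"
  obtain a b where ab: "a \<noteq> 0" "M \<subseteq> {x. a \<bullet> x \<le> b}" "F = M \<inter> {x. a \<bullet> x = b}"
    using facet_of_polyhedron[OF assms(1,3)] by blast
  define u where "u = (1 / norm a) *\<^sub>R a"
  have na: "norm a > 0" using ab(1) by simp
  have ex: "?P u"
  proof -
    have "\<forall>x\<in>M. u \<bullet> x \<le> b / norm a" using ab(2) na unfolding u_def
      by (auto simp: divide_right_mono)
    moreover have "F = M \<inter> {x. u \<bullet> x = b / norm a}" using ab(3) na unfolding u_def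
      by (auto simp: field_simps)
    moreover have "norm u = 1" unfolding u_def using na by simp
    ultimately show ?thesis by blast
  qed
  have affF: "aff_dim F = int DIM('a) - 1"
    using assms(3) aff_dim_nonempty_interior[OF assms(2)] by (simp add: facet_of_def)
  have Fne: "F \<noteq> {}" using assms(3) by (simp add: facet_of_def)
  have key: "affine hull F = {x. v \<bullet> x = c}" if "norm v = 1" "F = M \<inter> {x. v \<bullet> x = c}" for v c
  proof (rule affine_dim_equal)
    show "affine (affine hull F)" by simp
    show "affine {x. v \<bullet> x = c}" by (rule affine_hyperplane)
    show "affine hull F \<noteq> {}" using Fne by simp
    show "affine hull F \<subseteq> {x. v \<bullet> x = c}"
      using that(2) by (intro hull_minimal) (auto simp: affine_hyperplane)
    have "v \<noteq> 0" using that(1) by auto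
    then show "aff_dim (affine hull F) = aff_dim {x. v \<bullet> x = c}" using affF by simp
  qed
  have uniq: "v = u" if "?P v" for v
  proof -
    from that obtain c where c: "norm v = 1" "\<forall>x\<in>M. v \<bullet> x \<le> c" "F = M \<inter> {x. v \<bullet> x = c}" by blast
    from ex obtain d where d: "norm u = 1" "\<forall>x\<in>M. u \<bullet> x \<le> d" "F = M \<inter> {x. u \<bullet> x = d}" by blast
    have "{x. u \<bullet> x = d} = {x. v \<bullet> x = c}" using key[OF c(1) c(3)] key[OF d(1) d(3)] by simp
    from hyperplane_eq_unit[OF d(1) c(1) this] show ?thesis
    proof
      assume "v = u \<and> c = d" then show ?thesis by simp
    next
      assume h: "v = - u \<and> c = - d"
      have "M \<subseteq> {x. u \<bullet> x = d}"
      proof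
        fix x assume "x \<in> M"
        then have "u \<bullet> x \<le> d" "v \<bullet> x \<le> c" using c d by auto
        then show "x \<in> {x. u \<bullet> x = d}" using h by simp
      qed
      then have "interior M \<subseteq> interior {x. u \<bullet> x = d}" by (rule interior_mono)
      moreover have "u \<noteq> 0" using d(1) by auto
      ultimately show ?thesis using assms(2) by simp
    qed
  qed
  have "outer_normal M F = u" unfolding outer_normal_def
    using ex uniq by (rule the_equality)
  then show ?thesis using ex by simp
qed

lemma arc_path_0: "arc_path u v 0 = u"
  by (simp add: arc_path_def)

lemma arc_path_end:
  fixes u v :: "'a::euclidean_space"
  assumes "norm u = 1" "norm v = 1"
  shows "arc_path u v (arc_len u v) = v"
proof -
  define c where "c = u \<bullet> v"
  have uu: "u \<bullet> u = 1" using assms(1) by (simp add: dot_square_norm)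
  have vv: "v \<bullet> v = 1" using assms(2) by (simp add: dot_square_norm)
  have "\<bar>c\<bar> \<le> 1" unfolding c_def using Cauchy_Schwarz_ineq2[of u v] assms by simp
  then have c1: "-1 \<le> c" "c \<le> 1" by auto
  have n2: "(norm (v - c *\<^sub>R u))^2 = 1 - c^2"
    unfolding power2_norm_eq_inner by (simp add: inner_diff_left inner_diff_right uu vv c_def inner_commute power2_eq_square)
  have sq: "sqrt (1 - c^2) = norm (v - c *\<^sub>R u)"
    using n2 by (metis norm_ge_zero real_sqrt_abs abs_of_nonneg)
  show ?thesis
  proof (cases "norm (v - c *\<^sub>R u) = 0")
    case True
    then have "v = c *\<^sub>R u" by simp
    then show ?thesis unfolding arc_path_def arc_len_def c_def[symmetric] using c1 True
      by (simp add: cos_arccos)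
  next
    case False
    have "arc_path u v (arc_len u v) = c *\<^sub>R u + (sqrt (1 - c^2) * (1 / norm (v - c *\<^sub>R u))) *\<^sub>R (v - c *\<^sub>R u)"
      unfolding arc_path_def arc_len_def c_def[symmetric] using c1 by (simp add: cos_arccos sin_arccos)
    also have "\<dots> = v" using False sq by simp
    finally show ?thesis .
  qed
qed

lemma sin_ge_x_cos:
  fixes x :: real
  assumes "0 \<le> x" "x \<le> pi"
  shows "x * cos x \<le> sin x"
proof -
  have "(\<lambda>t. sin t - t * cos t) 0 \<le> (\<lambda>t. sin t - t * cos t) x"
  proof (rule DERIV_nonneg_imp_nondecreasing[OF assms(1)])
    fix t :: real assume t: "0 \<le> t" "t \<le> x"
    show "\<exists>y. ((\<lambda>t. sin t - t * cos t) has_real_derivative y) (at t) \<and> 0 \<le> y"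
    proof (intro exI conjI)
      show "((\<lambda>t. sin t - t * cos t) has_real_derivative (cos t - (1 * cos t + t * (- sin t)))) (at t)"
        by (intro derivative_eq_intros) auto
      show "0 \<le> cos t - (1 * cos t + t * (- sin t))"
        using sin_ge_zero[of t] t assms(2) by simp
    qed
  qed
  then show ?thesis by simp
qed

lemma cot_bound:
  fixes \<epsilon> :: real
  assumes "0 < \<epsilon>" "\<epsilon> < 1"
  shows "(1 - \<epsilon>) * pi * (cos (pi * \<epsilon> / 2) / sin (pi * \<epsilon> / 2)) \<le> 2 / \<epsilon>"
proof -
  define x where "x = pi * \<epsilon> / 2"
  have x0: "0 < x" using assms unfolding x_def by simp
  have xpi: "x < pi / 2" using assms unfolding x_def by (simp add: field_simps)
  have s0: "0 < sin x" using x0 xpi by (intro sin_gt_zero) auto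
  have c0: "0 \<le> cos x" using x0 xpi by (intro cos_ge_zero) auto
  have "cos x / sin x \<le> 1 / x"
    using sin_ge_x_cos[of x] x0 xpi s0 by (simp add: divide_simps mult.commute)
  then have "pi * (cos x / sin x) \<le> pi * (1 / x)" by (intro mult_left_mono) auto
  also have "pi * (1 / x) = 2 / \<epsilon>" unfolding x_def using assms by simp
  finally have A: "pi * (cos x / sin x) \<le> 2 / \<epsilon>" .
  have "(1 - \<epsilon>) * (pi * (cos x / sin x)) \<le> 1 * (pi * (cos x / sin x))"
    using assms s0 c0 by (intro mult_right_mono) auto
  then show ?thesis using A unfolding x_def[symmetric] by simp
qed

lemma abs_int_from_L2:
  fixes h :: "real \<Rightarrow> real"
  assumes "set_borel_measurable lborel {0..l} h" "set_integrable lborel {0..l} (\<lambda>t. (h t)\<^sup>2)"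
  shows "set_integrable lborel {0..l} h"
proof (rule set_integrable_bound[OF _ assms(1)])
  have "set_integrable lborel {0..l} (\<lambda>t. 1::real)"
    unfolding set_integrable_def by (rule borel_integrable_compact) auto
  then show "set_integrable lborel {0..l} (\<lambda>t. 1 + (h t)\<^sup>2)"
    using assms(2) unfolding set_integrable_def
    by (simp add: distrib_left)
  show "AE x in lborel. x \<in> {0..l} \<longrightarrow> norm (h x) \<le> norm (1 + (h x)\<^sup>2)"
  proof (rule AE_I2, rule impI)
    fix x
    have "\<bar>h x\<bar> \<le> 1 + (h x)\<^sup>2"
    proof (cases "\<bar>h x\<bar> \<le> 1")
      case True then show ?thesis by (simp add: add_increasing2)
    next
      case False
      then have "\<bar>h x\<bar> * 1 \<le> \<bar>h x\<bar> * \<bar>h x\<bar>" by (intro mult_left_mono) auto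
      then show ?thesis by (simp add: power2_eq_square)
    qed
    then show "norm (h x) \<le> norm (1 + (h x)\<^sup>2)" by simp
  qed
qed

lemma weak_to_HK:
  fixes g h \<phi> :: "real \<Rightarrow> real"
  assumes gc: "continuous_on {0..l} g" and hL1: "set_integrable lborel {0..l} h"
    and weakL: "(LINT t:{0..l}|lborel. g t * deriv \<phi> t) = - (LINT t:{0..l}|lborel. h t * \<phi> t)"
    and tf: "test_fun l \<phi>"
  shows "integral {0..l} (\<lambda>t. g t * deriv \<phi> t) = - integral {0..l} (\<lambda>t. h t * \<phi> t)"
proof -
  have d0: "\<phi> differentiable (at x)" for x using tf unfolding test_fun_def by (metis funpow_0)
  have d1: "deriv \<phi> differentiable (at x)" for x proof -
    have "(deriv ^^ Suc 0) \<phi> differentiable (at x)" using tf unfolding test_fun_def by blast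
    then show ?thesis by simp
  qed
  have cphi: "continuous_on S \<phi>" for S
    using d0 by (simp add: continuous_at_imp_continuous_on differentiable_imp_continuous_within)
  have cdphi: "continuous_on S (deriv \<phi>)" for S
    using d1 by (simp add: continuous_at_imp_continuous_on differentiable_imp_continuous_within)
  have i1: "set_integrable lborel {0..l} (\<lambda>t. g t * deriv \<phi> t)"
    unfolding set_integrable_def by (rule borel_integrable_compact) (auto intro!: continuous_intros gc cdphi)
  obtain K where K: "\<forall>x\<in>{0..l}. norm (\<phi> x) \<le> K"
    using compact_imp_bounded[OF compact_continuous_image[OF cphi compact_Icc], of 0 l]
    unfolding bounded_iff by auto
  have i2: "set_integrable lborel {0..l} (\<lambda>t. h t * \<phi> t)"
  proof (rule set_integrable_bound[where f = "\<lambda>t. K * h t"])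
    show "set_integrable lborel {0..l} (\<lambda>t. K * h t)" using hL1 by simp
    have m1: "(\<lambda>x. indicator {0..l} x *\<^sub>R h x) \<in> borel_measurable lborel"
      using hL1 unfolding set_integrable_def by (rule borel_measurable_integrable)
    have m2: "\<phi> \<in> borel_measurable lborel"
      using borel_measurable_continuous_onI[OF cphi] by simp
    have "(\<lambda>x. (indicator {0..l} x *\<^sub>R h x) * \<phi> x) \<in> borel_measurable lborel"
      using m1 m2 by (rule borel_measurable_times)
    then show "set_borel_measurable lborel {0..l} (\<lambda>t. h t * \<phi> t)"
      unfolding set_borel_measurable_def by (simp add: mult.assoc)
    show "AE x in lborel. x \<in> {0..l} \<longrightarrow> norm (h x * \<phi> x) \<le> norm (K * h x)"
    proof (rule AE_I2, rule impI)
      fix x assume "x \<in> {0..l}"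
      then have "\<bar>\<phi> x\<bar> \<le> \<bar>K\<bar>" using K by force
      then have "\<bar>h x\<bar> * \<bar>\<phi> x\<bar> \<le> \<bar>h x\<bar> * \<bar>K\<bar>" by (intro mult_left_mono) auto
      then show "norm (h x * \<phi> x) \<le> norm (K * h x)" by (simp add: abs_mult mult.commute)
    qed
  qed
  show ?thesis using weakL set_borel_integral_eq_integral(2)[OF i1] set_borel_integral_eq_integral(2)[OF i2] by simp
qed

theorem lemma7p3:
  fixes M F F' :: "(real^'n) set" and f :: "real^'n \<Rightarrow> real" and h :: "real \<Rightarrow> real"
    and \<epsilon> :: real
  assumes "CARD('n) \<ge> 3"
    and "polytope M" and "interior M \<noteq> {}"
    and "F facet_of M" and "F' facet_of M"
    and "aff_dim (F \<inter> F') = int CARD('n) - 2"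
    and "H1_on (edge_len M F F') (f \<circ> edge_path M F F')"
    and "weak_deriv_L2 (edge_len M F F') (f \<circ> edge_path M F F') h"
    and "0 < \<epsilon>" and "\<epsilon> < 1"
  shows "(edge_len M F F')\<^sup>2 * (LINT t:{0..edge_len M F F'}|lborel. (h t)\<^sup>2)
     \<ge> (1 - \<epsilon>)\<^sup>2 * pi\<^sup>2 * (LINT t:{0..edge_len M F F'}|lborel. (f (edge_path M F F' t))\<^sup>2)
       - 2 / \<epsilon> * edge_len M F F' * ((f (outer_normal M F))\<^sup>2 + (f (outer_normal M F'))\<^sup>2)"
proof -
  define u where "u = outer_normal M F"
  define v where "v = outer_normal M F'"
  define l where "l = edge_len M F F'"
  define g where "g t = f (edge_path M F F' t)" for t
  have pM: "polyhedron M" using assms(2) by (rule polytope_imp_polyhedron)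
  have nu: "norm u = 1" unfolding u_def using outer_normal_unit[OF pM assms(3,4)] .
  have nv: "norm v = 1" unfolding v_def using outer_normal_unit[OF pM assms(3,5)] .
  have l_eq: "l = arc_len u v" unfolding l_def edge_len_def u_def v_def ..
  have P_eq: "edge_path M F F' = arc_path u v" unfolding edge_path_def u_def v_def ..
  have g0: "g 0 = f u" unfolding g_def P_eq by (simp add: arc_path_0)
  have gl: "g l = f v" unfolding g_def P_eq l_eq using arc_path_end[OF nu nv] by simp
  have l0: "0 \<le> l"
  proof -
    have "\<bar>u \<bullet> v\<bar> \<le> 1" using Cauchy_Schwarz_ineq2[of u v] nu nv by simp
    then show ?thesis unfolding l_eq arc_len_def by (intro arccos_lbound) auto
  qed
  have H1: "H1_on l g" using assms(7) unfolding l_def g_def[abs_def] by (simp add: o_def)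
  have WD: "weak_deriv_L2 l g h" using assms(8) unfolding l_def g_def[abs_def] by (simp add: o_def)
  have gc: "continuous_on {0..l} g" and g2L: "set_integrable lborel {0..l} (\<lambda>t. (g t)\<^sup>2)"
    using H1 unfolding H1_on_def by auto
  have hm: "set_borel_measurable lborel {0..l} h" and h2L: "set_integrable lborel {0..l} (\<lambda>t. (h t)\<^sup>2)"
    and weakL: "\<And>\<phi>. test_fun l \<phi> \<Longrightarrow> (LINT t:{0..l}|lborel. g t * deriv \<phi> t) = - (LINT t:{0..l}|lborel. h t * \<phi> t)"
    using WD unfolding weak_deriv_L2_def by auto
  have Eh: "(LINT t:{0..l}|lborel. (h t)\<^sup>2) = integral {0..l} (\<lambda>t. (h t)\<^sup>2)"
    and h2: "(\<lambda>t. (h t)\<^sup>2) integrable_on {0..l}"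
    using set_borel_integral_eq_integral[OF h2L] by auto
  have Eg: "(LINT t:{0..l}|lborel. (g t)\<^sup>2) = integral {0..l} (\<lambda>t. (g t)\<^sup>2)"
    using set_borel_integral_eq_integral[OF g2L] by auto
  have goal: "l\<^sup>2 * integral {0..l} (\<lambda>t. (h t)\<^sup>2) \<ge> (1 - \<epsilon>)\<^sup>2 * pi\<^sup>2 * integral {0..l} (\<lambda>t. (g t)\<^sup>2)
       - 2 / \<epsilon> * l * ((g 0)\<^sup>2 + (g l)\<^sup>2)"
  proof (cases "l = 0")
    case True
    then show ?thesis by simp
  next
    case False
    then have lpos: "0 < l" using l0 by simp
    have hL1: "set_integrable lborel {0..l} h" by (rule abs_int_from_L2[OF hm h2L])
    have hint: "h integrable_on {0..l}" using set_borel_integral_eq_integral(1)[OF hL1] .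
    have habsint: "(\<lambda>t. \<bar>h t\<bar>) integrable_on {0..l}"
      using set_borel_integral_eq_integral(1)[OF set_integrable_abs[OF hL1]] .
    have hai: "h absolutely_integrable_on {0..l}" by (rule abs_absolutely_integrableI_1[OF hint habsint])
    have weakH: "integral {0..l} (\<lambda>t. g t * deriv \<phi> t) = - integral {0..l} (\<lambda>t. h t * \<phi> t)"
      if "test_fun l \<phi>" for \<phi>
      by (rule weak_to_HK[OF gc hL1 weakL[OF that] that])
    have ftc: "g b - g a = integral {a..b} h" if "0 \<le> a" "a \<le> b" "b \<le> l" for a b
      by (rule dbr_full[OF lpos gc hai weakH that])
    define \<omega> where "\<omega> = (1 - \<epsilon>) * pi / l"
    define \<delta> where "\<delta> = l * \<epsilon> / (2 * (1 - \<epsilon>))"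
    have om: "0 < \<omega>" unfolding \<omega>_def using assms(9,10) lpos by simp
    have de: "0 < \<delta>" unfolding \<delta>_def using assms(9,10) lpos by simp
    have od: "\<omega> * \<delta> = pi * \<epsilon> / 2" unfolding \<omega>_def \<delta>_def using assms(9,10) lpos by (simp add: field_simps)
    have ol: "\<omega> * l = (1 - \<epsilon>) * pi" unfolding \<omega>_def using lpos by simp
    have old: "\<omega> * (l + \<delta>) = pi - pi * \<epsilon> / 2" using od ol by (simp add: distrib_left algebra_simps)
    have olt: "\<omega> * (l + \<delta>) < pi" using old assms(9) by simp
    have G: "cotw \<omega> \<delta> l * (g l)^2 - cotw \<omega> \<delta> 0 * (g 0)^2 + \<omega>^2 * integral {0..l} (\<lambda>t. (g t)^2)
      \<le> integral {0..l} (\<lambda>t. (h t)^2)"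
      by (rule global_ineq[OF om de lpos olt hint h2 gc ftc])
    define C where "C = cos (pi * \<epsilon> / 2) / sin (pi * \<epsilon> / 2)"
    have c0: "cotw \<omega> \<delta> 0 = \<omega> * C" unfolding cotw_def C_def by (simp only: add_0_left od) simp
    have cl: "cotw \<omega> \<delta> l = - (\<omega> * C)" unfolding cotw_def C_def old by (simp add: cos_pi_minus sin_pi_minus)
    have G2: "\<omega>^2 * integral {0..l} (\<lambda>t. (g t)^2) - \<omega> * C * ((g 0)^2 + (g l)^2) \<le> integral {0..l} (\<lambda>t. (h t)^2)"
      using G unfolding c0 cl by (simp add: algebra_simps)
    have G3: "l^2 * (\<omega>^2 * integral {0..l} (\<lambda>t. (g t)^2) - \<omega> * C * ((g 0)^2 + (g l)^2)) \<le> l^2 * integral {0..l} (\<lambda>t. (h t)^2)"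
      using G2 by (intro mult_left_mono) auto
    have e1: "l^2 * \<omega>^2 = (1 - \<epsilon>)^2 * pi^2" using ol by (simp add: power_mult_distrib[symmetric] mult.commute)
    have e2: "l^2 * (\<omega> * C) = l * ((1 - \<epsilon>) * pi * C)"
    proof -
      have "l^2 * (\<omega> * C) = l * ((\<omega> * l) * C)" by (simp add: power2_eq_square mult_ac)
      then show ?thesis unfolding ol .
    qed
    have cb: "(1 - \<epsilon>) * pi * C \<le> 2 / \<epsilon>" unfolding C_def by (rule cot_bound[OF assms(9,10)])
    have Q0: "0 \<le> l * ((g 0)^2 + (g l)^2)" using l0 by simp
    have "l * ((g 0)^2 + (g l)^2) * ((1 - \<epsilon>) * pi * C) \<le> l * ((g 0)^2 + (g l)^2) * (2 / \<epsilon>)"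
      using cb Q0 by (rule mult_left_mono)
    moreover
    define A where "A = integral {0..l} (\<lambda>t. (g t)^2)"
    define Bh where "Bh = integral {0..l} (\<lambda>t. (h t)^2)"
    define Q where "Q = (g 0)^2 + (g l)^2"
    have X: "l^2 * (\<omega>^2 * A - \<omega> * C * Q) = (l^2 * \<omega>^2) * A - (l^2 * (\<omega> * C)) * Q"
      by (simp add: algebra_simps)
    have Y: "(l * ((1 - \<epsilon>) * pi * C)) * Q = l * Q * ((1 - \<epsilon>) * pi * C)" by (simp add: mult_ac)
    have Z: "2 / \<epsilon> * l * Q = l * Q * (2 / \<epsilon>)" by (simp add: mult_ac)
    ultimately show ?thesis using G3 unfolding A_def[symmetric] Bh_def[symmetric] Q_def[symmetric] X e1 e2
      by (simp only: Y Z)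
  qed
  have goal': "l\<^sup>2 * (LINT t:{0..l}|lborel. (h t)\<^sup>2) \<ge> (1 - \<epsilon>)\<^sup>2 * pi\<^sup>2 * (LINT t:{0..l}|lborel. (g t)\<^sup>2)
       - 2 / \<epsilon> * l * ((f u)\<^sup>2 + (f v)\<^sup>2)"
    using goal unfolding Eh Eg g0 gl .
  show ?thesis using goal' unfolding g_def l_def u_def v_def .
qed

end
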